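(* Let $n\ge 1$ and let $k_1<k_2<\cdots<k_n$ be integers. Then the number of monotone triangles with $n$ rows and bottom row $(k_1,\ldots,k_n)$ is equal to the value at $(x_1,\ldots,x_n)=(k_1,\ldots,k_n)$ of the polynomial $$\left( \prod_{1 \le p < q \le n} \left(\operatorname{id} + E_{x_q} \Delta_{x_p}\right)^{-1} \right) \prod_{1 \le i < j \le n} \frac{x_j - x_i}{j-i}.$$
   Context: A monotone triangle with $n$ rows is a triangular array $(a_{i,j})_{1\le j\le i\le n}$ of integers such that $a_{i,j}\le a_{i-1,j}\le a_{i,j+1}$ and $a_{i,j}<a_{i,j+1}$ whenever the indices are in range; its bottom row is $(a_{n,1},\ldots,a_{n,n})$. For a variable $x$, $E_x$ is the shift operator on polynomials, $E_x\,p(x)=p(x+1)$, and $\Delta_x=E_x-\operatorname{id}$. Products of operators denote composition (all these operators commute). On the polynomial ring $\mathbb{C}[x_1,\ldots,x_n]$ the operator $\operatorname{id}+E_{x_q}\Delta_{x_p}$ is invertible, with inverse $\sum_{l\ge 0}(-1)^l E_{x_q}^l\Delta_{x_p}^l$ (a finite sum on each polynomial). *)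

theory Defs
  imports Complex_Main
begin

text \<open>Polynomials in x_1,...,x_n are represented by the polynomial functions they induce
  on complex points; a point is a map nat => complex (coordinate i is x_i).\<close>

definition shiftE :: "nat \<Rightarrow> ((nat \<Rightarrow> complex) \<Rightarrow> complex) \<Rightarrow> ((nat \<Rightarrow> complex) \<Rightarrow> complex)" where
  "shiftE p f = (\<lambda>x. f (x(p := x p + 1)))"

definition diffD :: "nat \<Rightarrow> ((nat \<Rightarrow> complex) \<Rightarrow> complex) \<Rightarrow> ((nat \<Rightarrow> complex) \<Rightarrow> complex)" where
  "diffD p f = (\<lambda>x. shiftE p f x - f x)"

text \<open>Inverse of id + E_q Delta_p: the series sum_l (-1)^l E_q^l Delta_p^l, which is a finite
  sum on polynomials since Delta_p^l f = 0 for all large l.\<close>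
definition inv_op :: "nat \<Rightarrow> nat \<Rightarrow> ((nat \<Rightarrow> complex) \<Rightarrow> complex) \<Rightarrow> ((nat \<Rightarrow> complex) \<Rightarrow> complex)" where
  "inv_op p q f = (let N = (LEAST N. \<forall>l\<ge>N. (diffD p ^^ l) f = (\<lambda>_. 0)) in
     (\<lambda>x. \<Sum>l<N. (-1)^l * ((shiftE q ^^ l) ((diffD p ^^ l) f)) x))"

definition all_inv_ops :: "nat \<Rightarrow> ((nat \<Rightarrow> complex) \<Rightarrow> complex) \<Rightarrow> ((nat \<Rightarrow> complex) \<Rightarrow> complex)" where
  "all_inv_ops n = foldr (\<lambda>(p, q) g. inv_op p q \<circ> g)
      [(p, q). q \<leftarrow> [1..<n+1], p \<leftarrow> [1..<q]] id"

definition vdm_poly :: "nat \<Rightarrow> (nat \<Rightarrow> complex) \<Rightarrow> complex" where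
  "vdm_poly n = (\<lambda>x. \<Prod>j\<in>{1..n}. \<Prod>i\<in>{1..<j}. (x j - x i) / (of_nat j - of_nat i))"

definition monotone_triangle :: "nat \<Rightarrow> (nat \<Rightarrow> nat \<Rightarrow> int) \<Rightarrow> bool" where
  "monotone_triangle n a \<longleftrightarrow>
     (\<forall>i j. \<not> (1 \<le> j \<and> j \<le> i \<and> i \<le> n) \<longrightarrow> a i j = 0) \<and>
     (\<forall>i j. 2 \<le> i \<and> i \<le> n \<and> 1 \<le> j \<and> j < i \<longrightarrow>
         a i j \<le> a (i - 1) j \<and> a (i - 1) j \<le> a i (j + 1)) \<and>
     (\<forall>i j. i \<le> n \<and> 1 \<le> j \<and> j < i \<longrightarrow> a i j < a i (j + 1))"

definition monotone_triangles :: "nat \<Rightarrow> (nat \<Rightarrow> int) \<Rightarrow> (nat \<Rightarrow> nat \<Rightarrow> int) set" where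
  "monotone_triangles n k = {a. monotone_triangle n a \<and> (\<forall>j\<in>{1..n}. a n j = k j)}"

end

theory Submission
  imports Defs "HOL-Library.Multiset" "Jordan_Normal_Form.Determinant"
begin


type_synonym fn = "(nat \<Rightarrow> complex) \<Rightarrow> complex"

lemma shiftE_apply: "shiftE p f x = f (x(p := x p + 1))"
  by (simp add: shiftE_def)

lemma diffD_apply: "diffD p f x = f (x(p := x p + 1)) - f x"
  by (simp add: diffD_def shiftE_def)

definition linop :: "(fn \<Rightarrow> fn) \<Rightarrow> bool" where
  "linop L \<longleftrightarrow> (\<forall>f g. L (\<lambda>x. f x + g x) = (\<lambda>x. L f x + L g x)) \<and>
                 (\<forall>c f. L (\<lambda>x. c * f x) = (\<lambda>x. c * L f x))"

lemma linop_add: "linop L \<Longrightarrow> L (\<lambda>x. f x + g x) = (\<lambda>x. L f x + L g x)"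
  by (simp add: linop_def)

lemma linop_cmult: "linop L \<Longrightarrow> L (\<lambda>x. c * f x) = (\<lambda>x. c * L f x)"
  by (simp add: linop_def)

lemma linop_zero: "linop L \<Longrightarrow> L (\<lambda>x. 0) = (\<lambda>x. 0)"
  using linop_cmult[of L 0 "\<lambda>x. 0"] by simp

lemma linop_sum: "linop L \<Longrightarrow> L (\<lambda>x. \<Sum>i\<in>A. f i x) = (\<lambda>x. \<Sum>i\<in>A. L (f i) x)"
proof (induction A rule: infinite_finite_induct)
  case (infinite A) then show ?case by (simp add: linop_zero)
next
  case empty then show ?case by (simp add: linop_zero)
next
  case (insert a A)
  have "(\<lambda>x. \<Sum>i\<in>insert a A. f i x) = (\<lambda>x. f a x + (\<Sum>i\<in>A. f i x))"
    using insert.hyps(1,2) by (simp add: sum.insert)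
  then have "L (\<lambda>x. \<Sum>i\<in>insert a A. f i x) = L (\<lambda>x. f a x + (\<Sum>i\<in>A. f i x))"
    by simp
  also have "\<dots> = (\<lambda>x. L (f a) x + L (\<lambda>x. \<Sum>i\<in>A. f i x) x)"
    by (rule linop_add[OF insert.prems])
  also have "\<dots> = (\<lambda>x. L (f a) x + (\<Sum>i\<in>A. L (f i) x))"
    using insert.IH[OF insert.prems] by simp
  finally show ?case using insert.hyps(1,2) by (simp add: sum.insert)
qed

lemma linop_diff: "linop L \<Longrightarrow> L (\<lambda>x. f x - g x) = (\<lambda>x. L f x - L g x)"
proof -
  assume L: "linop L"
  have "(\<lambda>x. f x - g x) = (\<lambda>x. f x + (-1) * g x)" by simp
  then show ?thesis using linop_add[OF L, of f "\<lambda>x. (-1) * g x"] linop_cmult[OF L, of "-1" g]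
    by simp
qed

lemma linop_shiftE: "linop (shiftE p)"
  by (simp add: linop_def shiftE_def)

lemma linop_diffD: "linop (diffD p)"
  by (auto simp add: linop_def diffD_def shiftE_def algebra_simps)

lemma linop_comp: "linop L1 \<Longrightarrow> linop L2 \<Longrightarrow> linop (\<lambda>f. L1 (L2 f))"
  by (simp add: linop_def)

lemma linop_id: "linop (\<lambda>f. f)"
  by (simp add: linop_def)

lemma linop_funpow: "linop L \<Longrightarrow> linop (L ^^ n)"
proof (induction n)
  case 0 then show ?case by (simp add: linop_def)
next
  case (Suc n) then show ?case using linop_comp[of L "L^^n"] by (simp add: comp_def)
qed

definition SIL :: "(fn \<Rightarrow> fn) \<Rightarrow> bool" where
  "SIL L \<longleftrightarrow> linop L \<and> (\<forall>r f. L (shiftE r f) = shiftE r (L f))"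

lemma shiftE_comm: "shiftE p (shiftE q f) = shiftE q (shiftE p f)"
  by (cases "p = q") (auto simp: shiftE_def fun_upd_twist)

lemma SIL_shiftE: "SIL (shiftE p)"
  by (simp add: SIL_def linop_shiftE shiftE_comm)

lemma SIL_diffD_comm: "SIL L \<Longrightarrow> L (diffD p f) = diffD p (L f)"
proof -
  assume "SIL L"
  then have L: "linop L" and c: "\<And>r f. L (shiftE r f) = shiftE r (L f)" by (auto simp: SIL_def)
  have "diffD p f = (\<lambda>x. shiftE p f x - f x)" by (simp add: diffD_def)
  then have "L (diffD p f) = (\<lambda>x. L (shiftE p f) x - L f x)" using linop_diff[OF L] by simp
  then show ?thesis by (simp add: c diffD_def)
qed

lemma SIL_diffD: "SIL (diffD p)"
  unfolding SIL_def using linop_diffD SIL_diffD_comm[OF SIL_shiftE] by simp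

lemma SIL_comp: "SIL L1 \<Longrightarrow> SIL L2 \<Longrightarrow> SIL (\<lambda>f. L1 (L2 f))"
  by (simp add: SIL_def linop_comp)

lemma SIL_id: "SIL (\<lambda>f. f)"
  by (simp add: SIL_def linop_id)

lemma SIL_funpow: "SIL L \<Longrightarrow> SIL (L ^^ n)"
proof (induction n)
  case 0 then show ?case by (simp add: SIL_def linop_def)
next
  case (Suc n) then show ?case using SIL_comp[of L "L^^n"] by (simp add: comp_def)
qed

lemma SIL_funpow_comm: "SIL L \<Longrightarrow> (\<And>f. L (K f) = K (L f)) \<Longrightarrow> L ((K ^^ n) f) = (K ^^ n) (L f)"
  by (induction n arbitrary: f) auto

lemma SIL_shiftE_pow_comm: "SIL L \<Longrightarrow> L ((shiftE q ^^ n) f) = (shiftE q ^^ n) (L f)"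
  by (rule SIL_funpow_comm) (auto simp: SIL_def)

lemma SIL_diffD_pow_comm: "SIL L \<Longrightarrow> L ((diffD q ^^ n) f) = (diffD q ^^ n) (L f)"
  by (rule SIL_funpow_comm) (auto simp: SIL_diffD_comm)

definition Rsum :: "nat \<Rightarrow> nat \<Rightarrow> nat \<Rightarrow> fn \<Rightarrow> fn" where
  "Rsum p q M f = (\<lambda>x. \<Sum>l<M. (-1)^l * (shiftE q ^^ l) ((diffD p ^^ l) f) x)"

lemma SIL_Rsum_comm: "SIL L \<Longrightarrow> L (Rsum p q M f) = Rsum p q M (L f)"
proof -
  assume S: "SIL L"
  then have L: "linop L" by (simp add: SIL_def)
  have "L (Rsum p q M f) = (\<lambda>x. \<Sum>l<M. L (\<lambda>x. (-1)^l * (shiftE q ^^ l) ((diffD p ^^ l) f) x) x)"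
    unfolding Rsum_def by (rule linop_sum[OF L])
  also have "\<dots> = (\<lambda>x. \<Sum>l<M. (-1)^l * L ((shiftE q ^^ l) ((diffD p ^^ l) f)) x)"
    by (simp add: linop_cmult[OF L])
  also have "\<dots> = Rsum p q M (L f)"
  proof -
    have e: "L ((shiftE q ^^ l) ((diffD p ^^ l) f)) = (shiftE q ^^ l) ((diffD p ^^ l) (L f))" for l
      by (simp only: SIL_shiftE_pow_comm[OF S] SIL_diffD_pow_comm[OF S])
    show ?thesis unfolding Rsum_def e ..
  qed
  finally show ?thesis .
qed

lemma linop_Rsum: "linop (Rsum p q M)"
proof -
  have a1: "(shiftE q ^^ l) ((diffD p ^^ l) (\<lambda>x. f x + g x)) =
     (\<lambda>x. (shiftE q ^^ l) ((diffD p ^^ l) f) x + (shiftE q ^^ l) ((diffD p ^^ l) g) x)" for l f g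
    by (simp only: linop_add[OF linop_funpow[OF linop_diffD]] linop_add[OF linop_funpow[OF linop_shiftE]])
  have a2: "(shiftE q ^^ l) ((diffD p ^^ l) (\<lambda>x. c * f x)) =
     (\<lambda>x. c * (shiftE q ^^ l) ((diffD p ^^ l) f) x)" for l f c
    by (simp only: linop_cmult[OF linop_funpow[OF linop_diffD]] linop_cmult[OF linop_funpow[OF linop_shiftE]])
  have 1: "Rsum p q M (\<lambda>x. f x + g x) = (\<lambda>x. Rsum p q M f x + Rsum p q M g x)" for f g
    unfolding Rsum_def a1 by (simp only: sum.distrib distrib_left)
  have 2: "Rsum p q M (\<lambda>x. c * f x) = (\<lambda>x. c * Rsum p q M f x)" for c f
    unfolding Rsum_def a2 by (simp only: sum_distrib_left mult.left_commute)
  show ?thesis unfolding linop_def using 1 2 by blast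
qed

lemma SIL_Rsum: "SIL (Rsum p q M)"
  unfolding SIL_def using linop_Rsum SIL_Rsum_comm[OF SIL_shiftE] by simp

lemma Rsum_comm: "Rsum p q M (Rsum p' q' M' f) = Rsum p' q' M' (Rsum p q M f)"
  by (rule SIL_Rsum_comm[OF SIL_Rsum, symmetric])

definition nilp :: "nat \<Rightarrow> nat \<Rightarrow> fn \<Rightarrow> bool" where
  "nilp p M f \<longleftrightarrow> (diffD p ^^ M) f = (\<lambda>x. 0)"

definition good :: "nat \<Rightarrow> fn \<Rightarrow> bool" where
  "good M f \<longleftrightarrow> (\<forall>p. nilp p M f)"

lemma funpow_zero_fn: "linop L \<Longrightarrow> (L ^^ n) (\<lambda>x. 0) = (\<lambda>x. 0)"
  by (induction n) (auto simp: linop_zero)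

lemma nilp_mono: "nilp p M f \<Longrightarrow> M \<le> M' \<Longrightarrow> nilp p M' f"
proof -
  assume a: "nilp p M f" "M \<le> M'"
  have e: "M' = (M' - M) + M" using a(2) by simp
  have "(diffD p ^^ M') f = (diffD p ^^ (M' - M)) ((diffD p ^^ M) f)"
    by (subst e) (simp add: funpow_add)
  then show ?thesis using a(1) funpow_zero_fn[OF linop_diffD] by (simp add: nilp_def)
qed

lemma good_mono: "good M f \<Longrightarrow> M \<le> M' \<Longrightarrow> good M' f"
  using nilp_mono good_def by blast

lemma SIL_nilp: "SIL L \<Longrightarrow> nilp p M f \<Longrightarrow> nilp p M (L f)"
proof -
  assume a: "SIL L" "nilp p M f"
  have "(diffD p ^^ M) (L f) = L ((diffD p ^^ M) f)" using SIL_diffD_pow_comm[OF a(1)] by simp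
  also have "\<dots> = (\<lambda>x. 0)" using a(2) linop_zero[of L] a(1) by (simp add: nilp_def SIL_def)
  finally show ?thesis by (simp add: nilp_def)
qed

lemma SIL_good: "SIL L \<Longrightarrow> good M f \<Longrightarrow> good M (L f)"
  using SIL_nilp good_def by blast

lemma inv_op_Rsum:
  assumes "nilp p M f"
  shows "inv_op p q f = Rsum p q M f"
proof -
  let ?P = "\<lambda>N. \<forall>l\<ge>N. (diffD p ^^ l) f = (\<lambda>_. 0)"
  have PM: "?P M" using nilp_mono[OF assms] nilp_def by blast
  define N where "N = (LEAST N. ?P N)"
  have PN: "?P N" unfolding N_def by (rule LeastI[of ?P M, OF PM])
  have NM: "N \<le> M" unfolding N_def by (rule Least_le[of ?P M, OF PM])
  have z: "(shiftE q ^^ l) (\<lambda>_. 0) = (\<lambda>_. 0)" for l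
    using funpow_zero_fn[OF linop_shiftE] by simp
  have "(\<Sum>l<M. (-1)^l * (shiftE q ^^ l) ((diffD p ^^ l) f) x)
      = (\<Sum>l<N. (-1)^l * (shiftE q ^^ l) ((diffD p ^^ l) f) x)" for x
  proof -
    have "(\<Sum>l<M. (-1)^l * (shiftE q ^^ l) ((diffD p ^^ l) f) x)
      = (\<Sum>l<N. (-1)^l * (shiftE q ^^ l) ((diffD p ^^ l) f) x) +
        (\<Sum>l\<in>{N..<M}. (-1)^l * (shiftE q ^^ l) ((diffD p ^^ l) f) x)"
      using NM by (simp add: lessThan_atLeast0 sum.atLeastLessThan_concat)
    moreover have "(\<Sum>l\<in>{N..<M}. (-1)^l * (shiftE q ^^ l) ((diffD p ^^ l) f) x) = 0"
      using PN z by (intro sum.neutral) auto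
    ultimately show ?thesis by simp
  qed
  then show ?thesis unfolding inv_op_def Rsum_def N_def[symmetric] Let_def by simp
qed


definition Ops :: "nat \<Rightarrow> (nat \<times> nat) list \<Rightarrow> fn \<Rightarrow> fn" where
  "Ops M ps = foldr (\<lambda>(p, q) g. Rsum p q M \<circ> g) ps id"

lemma Ops_Nil[simp]: "Ops M [] f = f"
  by (simp add: Ops_def)

lemma Ops_Cons: "Ops M (a # ps) f = Rsum (fst a) (snd a) M (Ops M ps f)"
  by (cases a) (simp add: Ops_def)

lemma Ops_append: "Ops M (ps @ qs) f = Ops M ps (Ops M qs f)"
  by (induction ps) (auto simp: Ops_Cons)

lemma SIL_Ops: "SIL (Ops M ps)"
proof (induction ps)
  case Nil
  have "Ops M [] = (\<lambda>f. f)" by (rule ext) simp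
  then show ?case using SIL_id by simp
next
  case (Cons a ps)
  have "Ops M (a # ps) = (\<lambda>f. Rsum (fst a) (snd a) M (Ops M ps f))"
    by (rule ext) (simp add: Ops_Cons)
  then show ?case using SIL_comp[OF SIL_Rsum Cons.IH] by simp
qed

lemma Ops_Rsum_comm: "Ops M ps (Rsum p q M' f) = Rsum p q M' (Ops M ps f)"
  by (rule SIL_Rsum_comm[OF SIL_Ops])

lemma Ops_remove1: "a \<in> set ps \<Longrightarrow> Ops M ps f = Rsum (fst a) (snd a) M (Ops M (remove1 a ps) f)"
proof (induction ps)
  case Nil then show ?case by simp
next
  case (Cons b ps)
  show ?case
  proof (cases "a = b")
    case True then show ?thesis by (simp add: Ops_Cons)
  next
    case False
    then have "a \<in> set ps" using Cons.prems by simp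
    then have "Ops M (b # ps) f = Rsum (fst b) (snd b) M (Rsum (fst a) (snd a) M (Ops M (remove1 a ps) f))"
      using Cons.IH by (simp add: Ops_Cons)
    also have "\<dots> = Rsum (fst a) (snd a) M (Rsum (fst b) (snd b) M (Ops M (remove1 a ps) f))"
      by (rule Rsum_comm)
    finally show ?thesis using False by (simp add: Ops_Cons)
  qed
qed

lemma Ops_mset: "mset ps = mset ps' \<Longrightarrow> Ops M ps f = Ops M ps' f"
proof (induction ps arbitrary: ps' f)
  case Nil then show ?case by simp
next
  case (Cons a ps)
  have a: "a \<in> set ps'" using Cons.prems by (metis list.set_intros(1) set_mset_mset)
  have "mset ps' = add_mset a (mset ps)" using Cons.prems by simp
  then have "mset ps = mset (remove1 a ps')" by simp
  then have "Ops M ps f = Ops M (remove1 a ps') f" by (rule Cons.IH)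
  then show ?case using Ops_remove1[OF a] by (simp add: Ops_Cons)
qed

lemma good_Ops: "good M' f \<Longrightarrow> good M' (Ops M ps f)"
  by (rule SIL_good[OF SIL_Ops])

lemma foldr_inv_Ops:
  assumes "good M f"
  shows "foldr (\<lambda>(p, q) g. inv_op p q \<circ> g) ps id f = Ops M ps f"
proof (induction ps)
  case Nil then show ?case by (simp add: Ops_def)
next
  case (Cons a ps)
  obtain p q where a: "a = (p, q)" by (cases a)
  have "foldr (\<lambda>(p, q) g. inv_op p q \<circ> g) (a # ps) id f = inv_op p q (foldr (\<lambda>(p, q) g. inv_op p q \<circ> g) ps id f)"
    using a by simp
  also have "\<dots> = inv_op p q (Ops M ps f)" by (simp only: Cons.IH)
  also have "\<dots> = Rsum p q M (Ops M ps f)"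
    using good_Ops[OF assms] by (simp add: good_def inv_op_Rsum)
  also have "\<dots> = Ops M (a # ps) f" using a by (simp add: Ops_Cons)
  finally show ?case .
qed

definition pairs :: "nat \<Rightarrow> (nat \<times> nat) list" where
  "pairs n = [(p, q). q \<leftarrow> [1..<n+1], p \<leftarrow> [1..<q]]"

lemma all_inv_ops_Ops: "good M f \<Longrightarrow> all_inv_ops n f = Ops M (pairs n) f"
  unfolding all_inv_ops_def pairs_def by (rule foldr_inv_Ops)

lemma set_pairs: "set (pairs n) = {(p, q). 1 \<le> p \<and> p < q \<and> q \<le> n}"
proof
  show "set (pairs n) \<subseteq> {(p, q). 1 \<le> p \<and> p < q \<and> q \<le> n}"
    unfolding pairs_def by auto
  show "{(p, q). 1 \<le> p \<and> p < q \<and> q \<le> n} \<subseteq> set (pairs n)"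
  proof
    fix a assume "a \<in> {(p, q). 1 \<le> p \<and> p < q \<and> q \<le> n}"
    then obtain p q where a: "a = (p, q)" "1 \<le> p" "p < q" "q \<le> n" by auto
    then show "a \<in> set (pairs n)" unfolding pairs_def by (auto intro!: bexI[of _ q])
  qed
qed

lemma distinct_pairs: "distinct (pairs n)"
proof (induction n)
  case 0 then show ?case by (simp add: pairs_def)
next
  case (Suc n)
  have e: "pairs (Suc n) = pairs n @ map (\<lambda>p. (p, Suc n)) [1..<Suc n]"
    unfolding pairs_def by simp
  have "set (pairs n) \<inter> set (map (\<lambda>p. (p, Suc n)) [1..<Suc n]) = {}"
    unfolding set_pairs by auto
  moreover have "distinct (map (\<lambda>p. (p, Suc n)) [1..<Suc n])"
    by (simp add: distinct_map inj_on_def)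
  ultimately show ?case using Suc.IH e by simp
qed

definition Wop :: "nat \<Rightarrow> nat \<Rightarrow> fn \<Rightarrow> fn" where
  "Wop p q g = (\<lambda>x. g x + shiftE q (diffD p g) x)"

lemma W_Rsum:
  assumes "nilp p M f"
  shows "Wop p q (Rsum p q M f) = f"
proof
  fix x
  define a where "a l = (-1)^l * (shiftE q ^^ l) ((diffD p ^^ l) f) x" for l
  have SD: "SIL (\<lambda>g. shiftE q (diffD p g))" by (rule SIL_comp[OF SIL_shiftE SIL_diffD])
  then have L: "linop (\<lambda>g. shiftE q (diffD p g))" by (simp add: SIL_def)
  have step: "shiftE q (diffD p ((shiftE q ^^ l) ((diffD p ^^ l) f))) = (shiftE q ^^ Suc l) ((diffD p ^^ Suc l) f)" for l
  proof -
    have "diffD p ((shiftE q ^^ l) ((diffD p ^^ l) f)) = (shiftE q ^^ l) (diffD p ((diffD p ^^ l) f))"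
      by (rule SIL_shiftE_pow_comm[OF SIL_diffD])
    then show ?thesis by simp
  qed
  have "shiftE q (diffD p (Rsum p q M f)) x = (\<Sum>l<M. (-1)^l * (shiftE q ^^ Suc l) ((diffD p ^^ Suc l) f) x)"
  proof -
    have "shiftE q (diffD p (Rsum p q M f)) = (\<lambda>x. \<Sum>l<M. shiftE q (diffD p (\<lambda>x. (-1)^l * (shiftE q ^^ l) ((diffD p ^^ l) f) x)) x)"
      unfolding Rsum_def by (rule linop_sum[OF L])
    also have "\<dots> = (\<lambda>x. \<Sum>l<M. (-1)^l * shiftE q (diffD p ((shiftE q ^^ l) ((diffD p ^^ l) f))) x)"
      by (simp only: linop_cmult[OF L])
    finally show ?thesis by (simp only: step)
  qed
  then have "shiftE q (diffD p (Rsum p q M f)) x = - (\<Sum>l<M. a (Suc l))"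
    by (simp add: a_def sum_negf[symmetric])
  moreover have "Rsum p q M f x = (\<Sum>l<M. a l)" by (simp add: Rsum_def a_def)
  ultimately have "Wop p q (Rsum p q M f) x = (\<Sum>l<M. a l - a (Suc l))"
    by (simp add: Wop_def sum_subtractf)
  also have "\<dots> = a 0 - a M" by (rule sum_lessThan_telescope')
  also have "a M = 0"
    using assms funpow_zero_fn[OF linop_shiftE] by (simp add: a_def nilp_def)
  finally show "Wop p q (Rsum p q M f) x = f x" by (simp add: a_def)
qed

lemma Wop_Ops:
  assumes "good M f" "(p, q) \<in> set ps"
  shows "Wop p q (Ops M ps f) = Ops M (remove1 (p, q) ps) f"
proof -
  have "Ops M ps f = Rsum p q M (Ops M (remove1 (p, q) ps) f)"
    using Ops_remove1[OF assms(2)] by simp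
  moreover have "nilp p M (Ops M (remove1 (p, q) ps) f)"
    using good_Ops[OF assms(1)] by (simp add: good_def)
  ultimately show ?thesis using W_Rsum by simp
qed

section \<open>Renaming of variables\<close>

definition ren :: "(nat \<Rightarrow> nat) \<Rightarrow> fn \<Rightarrow> fn" where
  "ren \<rho> f = (\<lambda>x. f (x \<circ> \<rho>))"

lemma upd_comp_inj: "inj \<rho> \<Longrightarrow> (x(\<rho> r := v)) \<circ> \<rho> = (x \<circ> \<rho>)(r := v)"
  by (auto simp: fun_eq_iff inj_eq)

lemma upd_comp_out: "r \<notin> range \<rho> \<Longrightarrow> (x(r := v)) \<circ> \<rho> = x \<circ> \<rho>"
  by (auto simp: fun_eq_iff)

lemma shiftE_ren: "inj \<rho> \<Longrightarrow> shiftE (\<rho> r) (ren \<rho> f) = ren \<rho> (shiftE r f)"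
  by (simp add: shiftE_def ren_def upd_comp_inj)

lemma shiftE_ren_out: "r \<notin> range \<rho> \<Longrightarrow> shiftE r (ren \<rho> f) = ren \<rho> f"
  by (simp add: shiftE_def ren_def upd_comp_out)

lemma diffD_ren: "inj \<rho> \<Longrightarrow> diffD (\<rho> r) (ren \<rho> f) = ren \<rho> (diffD r f)"
  by (rule ext) (simp add: diffD_def shiftE_def ren_def upd_comp_inj)

lemma shiftE_pow_ren: "inj \<rho> \<Longrightarrow> (shiftE (\<rho> r) ^^ l) (ren \<rho> f) = ren \<rho> ((shiftE r ^^ l) f)"
  by (induction l) (simp_all add: shiftE_ren)

lemma diffD_pow_ren: "inj \<rho> \<Longrightarrow> (diffD (\<rho> r) ^^ l) (ren \<rho> f) = ren \<rho> ((diffD r ^^ l) f)"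
  by (induction l) (simp_all add: diffD_ren)

lemma Rsum_ren: "inj \<rho> \<Longrightarrow> Rsum (\<rho> p) (\<rho> q) M (ren \<rho> f) = ren \<rho> (Rsum p q M f)"
  by (simp add: Rsum_def diffD_pow_ren shiftE_pow_ren) (simp add: ren_def)

lemma Ops_ren: "inj \<rho> \<Longrightarrow> Ops M (map (\<lambda>(p, q). (\<rho> p, \<rho> q)) ps) (ren \<rho> f) = ren \<rho> (Ops M ps f)"
proof (induction ps)
  case Nil then show ?case by simp
next
  case (Cons a ps)
  obtain p q where a: "a = (p, q)" by (cases a)
  show ?case using Cons a by (simp add: Ops_Cons Rsum_ren)
qed

lemma linop_ren: "linop (ren \<rho>)"
  by (simp add: linop_def ren_def)

section \<open>Functions not depending on a variable\<close>

lemma Rsum_const_var: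
  assumes "M \<ge> 1" "diffD s g = (\<lambda>x. 0)"
  shows "Rsum s q M g = g"
proof
  fix x
  have z: "(diffD s ^^ l) g = (\<lambda>x. 0)" if l1: "l \<ge> 1" for l
  proof -
    obtain l' where "l = Suc l'" using l1 by (cases l) auto
    then have "(diffD s ^^ l) g = (diffD s ^^ l') (diffD s g)" by (simp add: funpow_swap1)
    then show ?thesis using assms(2) funpow_zero_fn[OF linop_diffD] by simp
  qed
  have "Rsum s q M g x = (\<Sum>l\<in>{0}. (-1)^l * (shiftE q ^^ l) ((diffD s ^^ l) g) x)"
    unfolding Rsum_def
  proof (rule sum.mono_neutral_right)
    show "\<forall>i\<in>{..<M} - {0}. (-1)^i * (shiftE q ^^ i) ((diffD s ^^ i) g) x = 0"
      using z funpow_zero_fn[OF linop_shiftE] by auto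
  qed (use assms in auto)
  then show "Rsum s q M g x = g x" by simp
qed

lemma Wop_shift_inv:
  assumes "shiftE s h = h"
  shows "Wop p s h = shiftE p h"
proof
  fix x
  have "shiftE s (diffD p h) = diffD p h"
    using SIL_diffD_comm[OF SIL_shiftE, of s p h] assms by simp
  then show "Wop p s h x = shiftE p h x"
    by (simp add: Wop_def) (simp add: diffD_def)
qed

lemma shiftE_Rsum_inv:
  assumes "nilp p M g" "shiftE s g = g"
  shows "shiftE p (Rsum p s M g) = g"
proof -
  have "shiftE s (Rsum p s M g) = Rsum p s M g"
    using SIL_Rsum_comm[OF SIL_shiftE, of s p s M g] assms(2) by simp
  then have "shiftE p (Rsum p s M g) = Wop p s (Rsum p s M g)" using Wop_shift_inv by simp
  also have "\<dots> = g" by (rule W_Rsum[OF assms(1)])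
  finally show ?thesis .
qed

definition Sh :: "nat list \<Rightarrow> fn \<Rightarrow> fn" where
  "Sh ps = foldr (\<lambda>p g. shiftE p \<circ> g) ps id"

lemma Sh_Nil[simp]: "Sh [] f = f" by (simp add: Sh_def)
lemma Sh_Cons: "Sh (p # ps) f = shiftE p (Sh ps f)" by (simp add: Sh_def)

lemma SIL_Sh: "SIL (Sh ps)"
proof (induction ps)
  case Nil
  have "Sh [] = (\<lambda>f. f)" by (rule ext) simp
  then show ?case using SIL_id by simp
next
  case (Cons a ps)
  have "Sh (a # ps) = (\<lambda>f. shiftE a (Sh ps f))" by (rule ext) (simp add: Sh_Cons)
  then show ?case using SIL_comp[OF SIL_shiftE Cons.IH] by simp
qed

lemma Sh_apply: "distinct ps \<Longrightarrow> Sh ps f x = f (\<lambda>i. x i + (if i \<in> set ps then 1 else 0))"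
proof (induction ps arbitrary: f x)
  case Nil then show ?case by simp
next
  case (Cons a ps)
  have "Sh (a # ps) f x = Sh ps f (x(a := x a + 1))"
    by (simp add: Sh_Cons shiftE_def SIL_def)
  also have "\<dots> = f (\<lambda>i. (x(a := x a + 1)) i + (if i \<in> set ps then 1 else 0))"
    using Cons by simp
  also have "(\<lambda>i. (x(a := x a + 1)) i + (if i \<in> set ps then 1 else 0)) =
      (\<lambda>i. x i + (if i \<in> set (a # ps) then 1 else 0))"
    using Cons.prems by (auto simp: fun_eq_iff)
  finally show ?case .
qed

lemma Sh_Ops_inv:
  assumes "s \<notin> set ps" "shiftE s h = h" "good M h"
  shows "Sh ps (Ops M (map (\<lambda>p. (p, s)) ps) h) = h"
  using assms(1)
proof (induction ps)
  case Nil then show ?case by simp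
next
  case (Cons p ps)
  have "Sh (p # ps) (Ops M (map (\<lambda>p. (p, s)) (p # ps)) h) =
        shiftE p (Sh ps (Rsum p s M (Ops M (map (\<lambda>p. (p, s)) ps) h)))"
    by (simp add: Sh_Cons Ops_Cons)
  also have "\<dots> = shiftE p (Rsum p s M (Sh ps (Ops M (map (\<lambda>p. (p, s)) ps) h)))"
    using SIL_Rsum_comm[OF SIL_Sh] by simp
  also have "\<dots> = shiftE p (Rsum p s M h)" using Cons by simp
  also have "\<dots> = h" using shiftE_Rsum_inv[of p M h s] assms(2,3) by (simp add: good_def)
  finally show ?case .
qed

lemma Ops_const_var:
  assumes "M \<ge> 1" "shiftE s h = h" "\<forall>a\<in>set ps. fst a = s"
  shows "Ops M ps h = h"
  using assms(3)
proof (induction ps)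
  case Nil then show ?case by simp
next
  case (Cons a ps)
  have "diffD s h = (\<lambda>x. 0)" using assms(2) by (auto simp: diffD_def)
  then show ?case using Cons Rsum_const_var[OF assms(1)] by (simp add: Ops_Cons)
qed

definition dep :: "nat \<Rightarrow> fn \<Rightarrow> bool" where
  "dep m G \<longleftrightarrow> (\<forall>x y. (\<forall>i\<in>{1..m}. x i = y i) \<longrightarrow> G x = G y)"

lemma dep_shiftE: "dep m G \<Longrightarrow> dep m (shiftE r G)"
  unfolding dep_def
proof (intro allI impI)
  fix x y :: "nat \<Rightarrow> complex"
  assume G: "\<forall>x y. (\<forall>i\<in>{1..m}. x i = y i) \<longrightarrow> G x = G y" and xy: "\<forall>i\<in>{1..m}. x i = y i"
  have "\<forall>i\<in>{1..m}. (x(r := x r + 1)) i = (y(r := y r + 1)) i" using xy by auto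
  then show "shiftE r G x = shiftE r G y" using G by (simp add: shiftE_def)
qed

lemma dep_diffD: "dep m G \<Longrightarrow> dep m (diffD r G)"
proof -
  assume a: "dep m G"
  then have b: "dep m (shiftE r G)" by (rule dep_shiftE)
  show ?thesis unfolding dep_def
  proof (intro allI impI)
    fix x y :: "nat \<Rightarrow> complex"
    assume xy: "\<forall>i\<in>{1..m}. x i = y i"
    then have "shiftE r G x = shiftE r G y" "G x = G y" using a b unfolding dep_def by blast+
    then show "diffD r G x = diffD r G y" by (simp add: diffD_def)
  qed
qed

lemma dep_funpow: "(\<And>G. dep m G \<Longrightarrow> dep m (L G)) \<Longrightarrow> dep m G \<Longrightarrow> dep m ((L ^^ n) G)"
  by (induction n) auto

lemma dep_Rsum: "dep m G \<Longrightarrow> dep m (Rsum p q M G)"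
proof -
  assume a: "dep m G"
  have d: "dep m ((shiftE q ^^ l) ((diffD p ^^ l) G))" for l
    using dep_funpow[of m "shiftE q", OF dep_shiftE] dep_funpow[of m "diffD p", OF dep_diffD] a by blast
  show ?thesis unfolding dep_def
  proof (intro allI impI)
    fix x y :: "nat \<Rightarrow> complex"
    assume xy: "\<forall>i\<in>{1..m}. x i = y i"
    have "(shiftE q ^^ l) ((diffD p ^^ l) G) x = (shiftE q ^^ l) ((diffD p ^^ l) G) y" for l
      using d[of l] xy unfolding dep_def by blast
    then show "Rsum p q M G x = Rsum p q M G y" unfolding Rsum_def by simp
  qed
qed

lemma dep_Ops: "dep m G \<Longrightarrow> dep m (Ops M ps G)"
  by (induction ps) (auto simp: Ops_Cons dep_Rsum)


section \<open>Degree bounds\<close>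

lemma nilp_zero_iff: "nilp p 0 f \<longleftrightarrow> f = (\<lambda>x. 0)"
  by (simp add: nilp_def)

lemma nilp_add: "nilp p a f \<Longrightarrow> nilp p a g \<Longrightarrow> nilp p a (\<lambda>x. f x + g x)"
  unfolding nilp_def by (simp add: linop_add[OF linop_funpow[OF linop_diffD]])

lemma nilp_cmult: "nilp p a f \<Longrightarrow> nilp p a (\<lambda>x. c * f x)"
  unfolding nilp_def by (simp add: linop_cmult[OF linop_funpow[OF linop_diffD]])

lemma nilp_0: "nilp p a (\<lambda>x. 0)"
  unfolding nilp_def by (rule funpow_zero_fn[OF linop_diffD])

lemma nilp_sum: "(\<And>s. s \<in> S \<Longrightarrow> nilp p a (f s)) \<Longrightarrow> nilp p a (\<lambda>x. \<Sum>s\<in>S. f s x)"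
  unfolding nilp_def by (simp add: linop_sum[OF linop_funpow[OF linop_diffD]])

lemma nilp_diffD: "nilp p (Suc a) f \<Longrightarrow> nilp p a (diffD p f)"
  unfolding nilp_def by (simp add: funpow_swap1)

lemma nilp_const: "diffD p f = (\<lambda>x. 0) \<Longrightarrow> nilp p (Suc a) f"
proof -
  assume a: "diffD p f = (\<lambda>x. 0)"
  have "(diffD p ^^ Suc a) f = (diffD p ^^ a) (diffD p f)" by (simp add: funpow_swap1)
  then show ?thesis unfolding nilp_def using a funpow_zero_fn[OF linop_diffD] by simp
qed

lemma diffD_mult: "diffD p (\<lambda>x. f x * g x) = (\<lambda>x. diffD p f x * shiftE p g x + f x * diffD p g x)"
  by (rule ext) (simp add: diffD_def shiftE_def algebra_simps)

lemma nilp_mult: "nilp p a f \<Longrightarrow> nilp p b g \<Longrightarrow> nilp p (a + b) (\<lambda>x. f x * g x)"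
proof (induction "a + b" arbitrary: a b f g rule: less_induct)
  case less
  show ?case
  proof (cases "a = 0 \<or> b = 0")
    case True
    then have "(\<lambda>x. f x * g x) = (\<lambda>x. 0)" using less.prems by (auto simp: nilp_zero_iff)
    then show ?thesis using nilp_0 by simp
  next
    case False
    then obtain a' b' where ab: "a = Suc a'" "b = Suc b'" by (cases a; cases b) auto
    have 1: "nilp p (a' + b) (\<lambda>x. diffD p f x * shiftE p g x)"
      using less.hyps[of a' b "diffD p f" "shiftE p g"] ab less.prems nilp_diffD SIL_nilp[OF SIL_shiftE]
      by simp
    have 2: "nilp p (a' + b) (\<lambda>x. f x * diffD p g x)"
      using less.hyps[of a b' f "diffD p g"] ab less.prems nilp_diffD by simp
    have "nilp p (a' + b) (diffD p (\<lambda>x. f x * g x))"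
      unfolding diffD_mult by (rule nilp_add[OF 1 2])
    then show ?thesis unfolding nilp_def using ab by (simp add: funpow_swap1)
  qed
qed

lemma nilp_prod:
  assumes "finite S" "\<And>s. s \<in> S \<Longrightarrow> nilp p B (f s)"
  shows "nilp p (B * card S + 1) (\<lambda>x. \<Prod>s\<in>S. f s x)"
  using assms
proof (induction S rule: finite_induct)
  case empty
  have "diffD p (\<lambda>x. 1) = (\<lambda>x. 0)" by (simp add: diffD_def shiftE_def)
  then show ?case using nilp_const by simp
next
  case (insert s S)
  have "nilp p (B + (B * card S + 1)) (\<lambda>x. f s x * (\<Prod>s\<in>S. f s x))"
    using insert by (intro nilp_mult) auto
  then show ?case using insert.hyps by (simp add: algebra_simps)
qed

lemma nilp_gchoose: "nilp p (Suc k) (\<lambda>x. (x q + c) gchoose k)"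
proof (induction k)
  case 0
  have "diffD p (\<lambda>x. (x q + c) gchoose 0) = (\<lambda>x. 0)" by (simp add: diffD_def shiftE_def)
  then show ?case using nilp_const by simp
next
  case (Suc k)
  show ?case
  proof (cases "q = p")
    case True
    have "diffD p (\<lambda>x. (x q + c) gchoose Suc k) = (\<lambda>x. (x q + c) gchoose k)"
    proof
      fix x
      have "(x q + 1 + c) gchoose Suc k = ((x q + c) + 1) gchoose Suc k" by (simp add: algebra_simps)
      then show "diffD p (\<lambda>x. (x q + c) gchoose Suc k) x = (x q + c) gchoose k"
        using True by (simp add: diffD_def shiftE_def gbinomial_Suc_Suc)
    qed
    then show ?thesis using Suc unfolding nilp_def by (simp add: funpow_swap1)
  next
    case False
    then have "diffD p (\<lambda>x. (x q + c) gchoose Suc k) = (\<lambda>x. 0)" by (simp add: diffD_def shiftE_def)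
    then show ?thesis using nilp_const by simp
  qed
qed


lemma vdm_alt: "vdm_poly m x = (\<Prod>j<m. \<Prod>i<j. (x (Suc j) - x (Suc i)) / (of_nat j - of_nat i))"
proof -
  have "vdm_poly m x = (\<Prod>j\<in>{Suc 0..m}. \<Prod>i\<in>{Suc 0..<j}. (x j - x i) / (of_nat j - of_nat i))"
    by (simp add: vdm_poly_def)
  also have "\<dots> = (\<Prod>j<m. \<Prod>i\<in>{Suc 0..<Suc j}. (x (Suc j) - x i) / (of_nat (Suc j) - of_nat i))"
    by (rule prod.atLeast1_atMost_eq)
  also have "\<dots> = (\<Prod>j<m. \<Prod>i<j. (x (Suc j) - x (Suc i)) / (of_nat (Suc j) - of_nat (Suc i)))"
    by (simp only: atLeastLessThanSuc_atLeastAtMost prod.atLeast1_atMost_eq)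
  also have "\<dots> = (\<Prod>j<m. \<Prod>i<j. (x (Suc j) - x (Suc i)) / (of_nat j - of_nat i))"
    by simp
  finally show ?thesis .
qed

lemma vdm_rec: "vdm_poly (Suc m) x =
   (\<Prod>i<m. (x (Suc (Suc i)) - x 1) / of_nat (Suc i)) * vdm_poly m (\<lambda>j. x (Suc j))"
proof -
  define g where "g i j = (x (Suc j) - x (Suc i)) / (of_nat j - of_nat i :: complex)" for i j
  have "vdm_poly (Suc m) x = (\<Prod>j<Suc m. \<Prod>i<j. g i j)" unfolding vdm_alt g_def ..
  also have "\<dots> = (\<Prod>j<m. \<Prod>i<Suc j. g i (Suc j))" by (simp only: prod.lessThan_Suc_shift) simp
  also have "\<dots> = (\<Prod>j<m. g 0 (Suc j) * (\<Prod>i<j. g (Suc i) (Suc j)))"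
    by (simp only: prod.lessThan_Suc_shift)
  also have "\<dots> = (\<Prod>j<m. g 0 (Suc j)) * (\<Prod>j<m. \<Prod>i<j. g (Suc i) (Suc j))"
    by (rule prod.distrib)
  also have "(\<Prod>j<m. g 0 (Suc j)) = (\<Prod>i<m. (x (Suc (Suc i)) - x 1) / of_nat (Suc i))"
    by (simp add: g_def)
  also have "(\<Prod>j<m. \<Prod>i<j. g (Suc i) (Suc j)) = vdm_poly m (\<lambda>j. x (Suc j))"
    unfolding vdm_alt g_def by simp
  finally show ?thesis .
qed

lemma vdm_shift: "vdm_poly m (\<lambda>j. x j + c) = vdm_poly m x"
  by (simp add: vdm_poly_def)

definition gmat :: "nat \<Rightarrow> complex \<Rightarrow> (nat \<Rightarrow> nat) \<Rightarrow> (nat \<Rightarrow> complex) \<Rightarrow> complex mat" where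
  "gmat m c e x = mat m m (\<lambda>(i, j). (x (Suc i) + c) gchoose (e j))"

lemma gmat_carrier[simp]: "gmat m c e x \<in> carrier_mat m m"
  by (simp add: gmat_def)

lemma det_gmat: "det (gmat m c e x) =
  (\<Sum>p\<in>{p. p permutes {0..<m}}. of_int (sign p) * (\<Prod>i=0..<m. (x (Suc i) + c) gchoose (e (p i))))"
proof -
  have "det (gmat m c e x) = (\<Sum>p\<in>{p. p permutes {0..<m}}. of_int (sign p) * (\<Prod>i=0..<m. gmat m c e x $$ (i, p i)))"
    by (rule det_def'[OF gmat_carrier])
  also have "\<dots> = (\<Sum>p\<in>{p. p permutes {0..<m}}. of_int (sign p) * (\<Prod>i=0..<m. (x (Suc i) + c) gchoose (e (p i))))"
  proof (rule sum.cong[OF refl])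
    fix p assume "p \<in> {p. p permutes {0..<m}}"
    then have "p i < m" if "i < m" for i using permutes_in_image that by fastforce
    then show "of_int (sign p) * (\<Prod>i=0..<m. gmat m c e x $$ (i, p i)) =
      of_int (sign p) * (\<Prod>i=0..<m. (x (Suc i) + c) gchoose (e (p i)))"
      by (simp add: gmat_def)
  qed
  finally show ?thesis .
qed

lemma good_gmat:
  assumes "\<And>j. j < m \<Longrightarrow> e j \<le> K"
  shows "good (Suc K * m + 1) (\<lambda>x. det (gmat m c e x))"
  unfolding good_def
proof
  fix p
  show "nilp p (Suc K * m + 1) (\<lambda>x. det (gmat m c e x))"
    unfolding det_gmat
  proof (rule nilp_sum, rule nilp_cmult)
    fix \<pi> assume "\<pi> \<in> {p. p permutes {0..<m}}"
    then have "\<pi> i < m" if "i < m" for i using permutes_in_image that by fastforce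
    then have "nilp p (Suc K) (\<lambda>x. (x (Suc i) + c) gchoose (e (\<pi> i)))" if i: "i \<in> {0..<m}" for i
    proof -
      have "e (\<pi> i) \<le> K" using assms \<open>\<And>i. i < m \<Longrightarrow> \<pi> i < m\<close> i by simp
      then show ?thesis using nilp_mono[OF nilp_gchoose[of p "e (\<pi> i)" "Suc i" c]] by simp
    qed
    from nilp_prod[of "{0..<m}", OF _ this]
    show "nilp p (Suc K * m + 1) (\<lambda>x. \<Prod>i = 0..<m. (x (Suc i) + c) gchoose e (\<pi> i))" by simp
  qed
qed

lemma det_rc: "det (mat n n (\<lambda>(i,j). r i * c j * E (i,j))) =
  (\<Prod>i<n. r i) * (\<Prod>j<n. c j) * det (mat n n E)"
proof -
  have "det (mat n n (\<lambda>(i,j). r i * c j * E (i,j))) =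
     (\<Sum>p\<in>{p. p permutes {0..<n}}. of_int (sign p) * (\<Prod>i=0..<n. r i * c (p i) * E (i, p i)))"
  proof -
    have "det (mat n n (\<lambda>(i,j). r i * c j * E (i,j))) = (\<Sum>p\<in>{p. p permutes {0..<n}}. of_int (sign p) *
        (\<Prod>i=0..<n. mat n n (\<lambda>(i,j). r i * c j * E (i,j)) $$ (i, p i)))"
      by (rule det_def') simp
    also have "\<dots> = (\<Sum>p\<in>{p. p permutes {0..<n}}. of_int (sign p) * (\<Prod>i=0..<n. r i * c (p i) * E (i, p i)))"
    proof (rule sum.cong[OF refl])
      fix p assume "p \<in> {p. p permutes {0..<n}}"
      then have "p i < n" if "i < n" for i using permutes_in_image that by fastforce
      then show "of_int (sign p) * (\<Prod>i=0..<n. mat n n (\<lambda>(i,j). r i * c j * E (i,j)) $$ (i, p i)) =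
        of_int (sign p) * (\<Prod>i=0..<n. r i * c (p i) * E (i, p i))" by simp
    qed
    finally show ?thesis .
  qed
  also have "\<dots> = (\<Sum>p\<in>{p. p permutes {0..<n}}. (\<Prod>i<n. r i) * (\<Prod>j<n. c j) * (of_int (sign p) * (\<Prod>i=0..<n. E (i, p i))))"
  proof (rule sum.cong[OF refl])
    fix p assume "p \<in> {p. p permutes {0..<n}}"
    then have pp: "p permutes {0..<n}" by simp
    have "(\<Prod>i=0..<n. r i * c (p i) * E (i, p i)) = (\<Prod>i=0..<n. r i) * (\<Prod>i=0..<n. c (p i)) * (\<Prod>i=0..<n. E (i, p i))"
      by (simp add: prod.distrib)
    also have "(\<Prod>i=0..<n. c (p i)) = (\<Prod>i=0..<n. c i)"
      using prod.permute[OF pp, of c] by (simp add: comp_def)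
    finally show "of_int (sign p) * (\<Prod>i=0..<n. r i * c (p i) * E (i, p i)) =
       (\<Prod>i<n. r i) * (\<Prod>j<n. c j) * (of_int (sign p) * (\<Prod>i=0..<n. E (i, p i)))"
      by (simp add: lessThan_atLeast0 algebra_simps)
  qed
  also have "\<dots> = (\<Prod>i<n. r i) * (\<Prod>j<n. c j) * (\<Sum>p\<in>{p. p permutes {0..<n}}. of_int (sign p) * (\<Prod>i=0..<n. E (i, p i)))"
    by (simp add: sum_distrib_left)
  also have "(\<Sum>p\<in>{p. p permutes {0..<n}}. of_int (sign p) * (\<Prod>i=0..<n. E (i, p i))) = det (mat n n E)"
  proof -
    have "det (mat n n E) = (\<Sum>p\<in>{p. p permutes {0..<n}}. of_int (sign p) * (\<Prod>i=0..<n. mat n n E $$ (i, p i)))"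
      by (rule det_def') simp
    also have "\<dots> = (\<Sum>p\<in>{p. p permutes {0..<n}}. of_int (sign p) * (\<Prod>i=0..<n. E (i, p i)))"
    proof (rule sum.cong[OF refl])
      fix p assume "p \<in> {p. p permutes {0..<n}}"
      then have "p i < n" if "i < n" for i using permutes_in_image that by fastforce
      then show "of_int (sign p) * (\<Prod>i=0..<n. mat n n E $$ (i, p i)) =
        of_int (sign p) * (\<Prod>i=0..<n. E (i, p i))" by simp
    qed
    finally show ?thesis by simp
  qed
  finally show ?thesis .
qed


lemma gchoose_step:
  fixes y a :: complex
  shows "(y gchoose Suc j) + (y gchoose j) * (- (a - of_nat j) / of_nat (Suc j)) =
         (y gchoose j) * (y - a) / of_nat (Suc j)"
proof -
  have "y * (y gchoose j) = of_nat j * (y gchoose j) + of_nat (Suc j) * (y gchoose Suc j)"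
    by (rule gbinomial_mult_1)
  then have "(y gchoose Suc j) = (y - of_nat j) * (y gchoose j) / of_nat (Suc j)"
    by (simp add: field_simps del: of_nat_Suc)
  then show ?thesis by (simp add: field_simps del: of_nat_Suc)
qed

lemma vand: "det (gmat m 0 id x) = vdm_poly m x"
proof (induction m arbitrary: x)
  case 0
  have "det (gmat 0 0 id x) = 1" by (rule det_dim_zero) simp
  then show ?case by (simp add: vdm_poly_def)
next
  case (Suc m)
  define a where "a = x 1"
  define A where "A = gmat (Suc m) 0 id x"
  define C where "C = mat (Suc m) (Suc m) (\<lambda>(i,j). if i = j then 1 else
      if j = Suc i then - (a - of_nat i) / of_nat (Suc i) else (0::complex))"
  have Ac: "A \<in> carrier_mat (Suc m) (Suc m)" by (simp add: A_def)
  have Cc: "C \<in> carrier_mat (Suc m) (Suc m)" by (simp add: C_def)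
  have "upper_triangular C" unfolding upper_triangular_def C_def by auto
  then have "det C = prod_list (diag_mat C)" using det_upper_triangular Cc by blast
  also have "\<dots> = 1" unfolding prod_list_diag_prod by (simp add: C_def)
  finally have detC: "det C = 1" .
  define B where "B = A * C"
  have Bc: "B \<in> carrier_mat (Suc m) (Suc m)" using Ac Cc by (simp add: B_def)
  have detB: "det B = det A" using det_mult[OF Ac Cc] detC by (simp add: B_def)
  have Bentry: "B $$ (i, j) = (if j = 0 then 1 else (x (Suc i) gchoose (j - 1)) * (x (Suc i) - a) / of_nat j)"
    if ij: "i < Suc m" "j < Suc m" for i j
  proof -
    define y where "y = x (Suc i)"
    have "B $$ (i, j) = (\<Sum>k\<in>{0..<Suc m}. A $$ (i, k) * C $$ (k, j))"
      using ij Ac Cc by (simp add: B_def scalar_prod_def)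
    also have "\<dots> = (\<Sum>k\<in>{0..<Suc m}. (if k = j then y gchoose k else 0) +
        (if Suc k = j then (y gchoose k) * (- (a - of_nat k) / of_nat (Suc k)) else 0))"
    proof (rule sum.cong[OF refl])
      fix k assume "k \<in> {0..<Suc m}"
      then have k: "k < Suc m" by simp
      have a1: "A $$ (i, k) = y gchoose k" using k ij by (simp add: A_def gmat_def y_def)
      have c1: "C $$ (k, j) = (if k = j then 1 else if j = Suc k then - (a - of_nat k) / of_nat (Suc k) else 0)"
        using k ij by (simp add: C_def)
      show "A $$ (i, k) * C $$ (k, j) = (if k = j then y gchoose k else 0) +
        (if Suc k = j then (y gchoose k) * (- (a - of_nat k) / of_nat (Suc k)) else 0)"
        unfolding a1 c1 by auto
    qed
    also have "\<dots> = (if j = 0 then 1 else (y gchoose (j - 1)) * (y - a) / of_nat j)"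
    proof (cases j)
      case 0
      have "(\<Sum>k\<in>{0..<Suc m}. (if Suc k = j then (y gchoose k) * (- (a - of_nat k) / of_nat (Suc k)) else 0)) = 0"
        using 0 by simp
      then show ?thesis using 0 by (simp add: sum.distrib)
    next
      case (Suc j')
      have s1: "(\<Sum>k\<in>{0..<Suc m}. (if k = j then y gchoose k else 0)) = y gchoose j"
        using ij by simp
      have "(\<Sum>k\<in>{0..<Suc m}. (if Suc k = j then (y gchoose k) * (- (a - of_nat k) / of_nat (Suc k)) else 0))
          = (\<Sum>k\<in>{0..<Suc m}. (if k = j' then (y gchoose k) * (- (a - of_nat k) / of_nat (Suc k)) else 0))"
        using Suc by (intro sum.cong) auto
      also have "\<dots> = (y gchoose j') * (- (a - of_nat j') / of_nat (Suc j'))"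
        using ij Suc by simp
      finally have s2: "(\<Sum>k\<in>{0..<Suc m}. (if Suc k = j then (y gchoose k) * (- (a - of_nat k) / of_nat (Suc k)) else 0))
          = (y gchoose j') * (- (a - of_nat j') / of_nat (Suc j'))" .
      show ?thesis unfolding sum.distrib s1 s2 using Suc gchoose_step[of y j' a] by simp
    qed
    finally show ?thesis by (simp add: y_def)
  qed
  have "det B = (\<Sum>j<Suc m. B $$ (0, j) * cofactor B 0 j)"
    by (rule laplace_expansion_row[OF Bc]) simp
  also have "\<dots> = B $$ (0, 0) * cofactor B 0 0 + (\<Sum>j<m. B $$ (0, Suc j) * cofactor B 0 (Suc j))"
    by (rule sum.lessThan_Suc_shift)
  also have "(\<Sum>j<m. B $$ (0, Suc j) * cofactor B 0 (Suc j)) = 0"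
    by (rule sum.neutral) (simp add: Bentry a_def)
  also have "B $$ (0, 0) = 1" by (simp add: Bentry)
  also have "cofactor B 0 0 = det (mat_delete B 0 0)" by (simp add: cofactor_def)
  also have "mat_delete B 0 0 = mat m m (\<lambda>(i,j). (x (Suc (Suc i)) - a) * (1 / of_nat (Suc j)) *
                  ((x (Suc (Suc i))) gchoose j))"
  proof (rule eq_matI)
    fix i j assume "i < dim_row (mat m m (\<lambda>(i,j). (x (Suc (Suc i)) - a) * (1 / of_nat (Suc j)) *
                  ((x (Suc (Suc i))) gchoose j)))"
      "j < dim_col (mat m m (\<lambda>(i,j). (x (Suc (Suc i)) - a) * (1 / of_nat (Suc j)) *
                  ((x (Suc (Suc i))) gchoose j)))"
    then have ij: "i < m" "j < m" by auto
    have "mat_delete B 0 0 $$ (i, j) = B $$ (Suc i, Suc j)"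
      unfolding mat_delete_def using ij Bc by simp
    also have "\<dots> = (x (Suc (Suc i)) - a) * (1 / of_nat (Suc j)) * ((x (Suc (Suc i))) gchoose j)"
      using ij by (simp add: Bentry del: of_nat_Suc)
    finally show "mat_delete B 0 0 $$ (i, j) = mat m m (\<lambda>(i,j). (x (Suc (Suc i)) - a) * (1 / of_nat (Suc j)) *
                  ((x (Suc (Suc i))) gchoose j)) $$ (i, j)" using ij by simp
  qed (use Bc in auto)
  also have "det (mat m m (\<lambda>(i,j). (x (Suc (Suc i)) - a) * (1 / of_nat (Suc j)) *
                  ((x (Suc (Suc i))) gchoose j))) =
      (\<Prod>i<m. x (Suc (Suc i)) - a) * (\<Prod>j<m. 1 / of_nat (Suc j)) * det (mat m m (\<lambda>(i,j). (x (Suc (Suc i))) gchoose j))"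
    using det_rc[of m "\<lambda>i. x (Suc (Suc i)) - a" "\<lambda>j. 1 / of_nat (Suc j)" "\<lambda>(i,j). (x (Suc (Suc i))) gchoose j"]
    by simp
  also have "mat m m (\<lambda>(i,j). (x (Suc (Suc i))) gchoose j) = gmat m 0 id (\<lambda>j. x (Suc j))"
    by (simp add: gmat_def)
  also have "det (gmat m 0 id (\<lambda>j. x (Suc j))) = vdm_poly m (\<lambda>j. x (Suc j))" by (rule Suc.IH)
  finally have "det A = (\<Prod>i<m. x (Suc (Suc i)) - a) * (\<Prod>j<m. 1 / of_nat (Suc j)) * vdm_poly m (\<lambda>j. x (Suc j))"
    using detB by simp
  also have "(\<Prod>i<m. x (Suc (Suc i)) - a) * (\<Prod>j<m. 1 / of_nat (Suc j)) =
      (\<Prod>i<m. (x (Suc (Suc i)) - x 1) / of_nat (Suc i))"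
    by (simp add: a_def prod_dividef del: of_nat_Suc)
  also have "(\<Prod>i<m. (x (Suc (Suc i)) - x 1) / of_nat (Suc i)) * vdm_poly m (\<lambda>j. x (Suc j)) = vdm_poly (Suc m) x"
    using vdm_rec[of m x] by simp
  finally show ?case unfolding A_def .
qed


definition skip :: "nat \<Rightarrow> nat \<Rightarrow> nat" where
  "skip s j = (if j < s then j else Suc j)"

lemma inj_skip: "inj (skip s)"
  unfolding inj_def skip_def by auto

lemma vdm_laplace: "vdm_poly (Suc m) x = (\<Sum>i<Suc m. (-1)^i * det (gmat m 1 Suc (x \<circ> skip (Suc i))))"
proof -
  have "vdm_poly (Suc m) x = vdm_poly (Suc m) (\<lambda>j. x j + 1)" by (simp add: vdm_shift)
  also have "\<dots> = det (gmat (Suc m) 0 id (\<lambda>j. x j + 1))" by (simp add: vand)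
  also have "gmat (Suc m) 0 id (\<lambda>j. x j + 1) = gmat (Suc m) 1 id x" by (simp add: gmat_def)
  finally have v: "vdm_poly (Suc m) x = det (gmat (Suc m) 1 id x)" .
  define A where "A = gmat (Suc m) 1 id x"
  have "det A = (\<Sum>i<Suc m. A $$ (i, 0) * cofactor A i 0)"
    by (rule laplace_expansion_column) (auto simp: A_def)
  also have "\<dots> = (\<Sum>i<Suc m. (-1)^i * det (gmat m 1 Suc (x \<circ> skip (Suc i))))"
  proof (rule sum.cong[OF refl])
    fix i assume "i \<in> {..<Suc m}"
    then have i: "i < Suc m" by simp
    have a0: "A $$ (i, 0) = 1" using i by (simp add: A_def gmat_def)
    have md: "mat_delete A i 0 = gmat m 1 Suc (x \<circ> skip (Suc i))"
    proof (rule eq_matI)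
      fix r j assume "r < dim_row (gmat m 1 Suc (x \<circ> skip (Suc i)))" "j < dim_col (gmat m 1 Suc (x \<circ> skip (Suc i)))"
      then have rj: "r < m" "j < m" by (auto simp: gmat_def)
      have "mat_delete A i 0 $$ (r, j) = A $$ (if r < i then r else Suc r, Suc j)"
        unfolding mat_delete_def using rj by (simp add: A_def gmat_def)
      also have "\<dots> = (x (Suc (if r < i then r else Suc r)) + 1) gchoose (Suc j)"
        using rj by (simp add: A_def gmat_def)
      also have "\<dots> = gmat m 1 Suc (x \<circ> skip (Suc i)) $$ (r, j)"
        using rj by (simp add: gmat_def skip_def)
      finally show "mat_delete A i 0 $$ (r, j) = gmat m 1 Suc (x \<circ> skip (Suc i)) $$ (r, j)" .
    qed (auto simp: A_def gmat_def)
    show "A $$ (i, 0) * cofactor A i 0 = (-1)^i * det (gmat m 1 Suc (x \<circ> skip (Suc i)))"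
      unfolding a0 cofactor_def md by simp
  qed
  finally show ?thesis using v by (simp add: A_def)
qed

fun Dm :: "nat \<Rightarrow> fn \<Rightarrow> fn" where
  "Dm 0 G = G"
| "Dm (Suc m) G = Dm m (diffD (Suc m) G)"

lemma SIL_Dm: "SIL (Dm m)"
proof (induction m)
  case 0
  have "Dm 0 = (\<lambda>G. G)" by (rule ext) simp
  then show ?case using SIL_id by simp
next
  case (Suc m)
  have "Dm (Suc m) = (\<lambda>G. Dm m (diffD (Suc m) G))" by (rule ext) simp
  then show ?case using SIL_comp[OF Suc.IH SIL_diffD] by simp
qed

lemma Dm_prod:
  assumes "\<forall>x j v. 1 \<le> j \<longrightarrow> j \<le> m \<longrightarrow> h (x(j := v)) = h x"
  shows "Dm m (\<lambda>x. h x * (\<Prod>i<m. g i (x (Suc i)))) = (\<lambda>x. h x * (\<Prod>i<m. g i (x (Suc i) + 1) - g i (x (Suc i))))"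
  using assms
proof (induction m arbitrary: h)
  case 0 then show ?case by simp
next
  case (Suc m)
  define h' where "h' x = h x * (g m (x (Suc m) + 1) - g m (x (Suc m)))" for x
  have d: "diffD (Suc m) (\<lambda>x. h x * (\<Prod>i<Suc m. g i (x (Suc i)))) = (\<lambda>x. h' x * (\<Prod>i<m. g i (x (Suc i))))"
  proof
    fix x
    have hx: "h (x(Suc m := x (Suc m) + 1)) = h x" by (rule Suc.prems[rule_format]) auto
    have "(\<Prod>i<Suc m. g i ((x(Suc m := x (Suc m) + 1)) (Suc i))) = (\<Prod>i<m. g i (x (Suc i))) * g m (x (Suc m) + 1)"
      by (simp add: prod.lessThan_Suc)
    moreover have "(\<Prod>i<Suc m. g i (x (Suc i))) = (\<Prod>i<m. g i (x (Suc i))) * g m (x (Suc m))"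
      by (simp add: prod.lessThan_Suc)
    ultimately have "diffD (Suc m) (\<lambda>x. h x * (\<Prod>i<Suc m. g i (x (Suc i)))) x =
        h x * ((\<Prod>i<m. g i (x (Suc i))) * g m (x (Suc m) + 1)) - h x * ((\<Prod>i<m. g i (x (Suc i))) * g m (x (Suc m)))"
      by (simp only: diffD_def shiftE_def hx)
    then show "diffD (Suc m) (\<lambda>x. h x * (\<Prod>i<Suc m. g i (x (Suc i)))) x = h' x * (\<Prod>i<m. g i (x (Suc i)))"
      by (simp add: h'_def algebra_simps)
  qed
  have h': "\<forall>x j v. 1 \<le> j \<longrightarrow> j \<le> m \<longrightarrow> h' (x(j := v)) = h' x"
  proof (intro allI impI)
    fix x j v assume j: "1 \<le> j" "j \<le> m"
    then have "h (x(j := v)) = h x" by (intro Suc.prems[rule_format]) auto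
    moreover have "(x(j := v)) (Suc m) = x (Suc m)" using j by simp
    ultimately show "h' (x(j := v)) = h' x" by (simp only: h'_def)
  qed
  have "Dm (Suc m) (\<lambda>x. h x * (\<Prod>i<Suc m. g i (x (Suc i)))) = Dm m (\<lambda>x. h' x * (\<Prod>i<m. g i (x (Suc i))))"
    using d by simp
  also have "\<dots> = (\<lambda>x. h' x * (\<Prod>i<m. g i (x (Suc i) + 1) - g i (x (Suc i))))"
    by (rule Suc.IH[OF h'])
  also have "\<dots> = (\<lambda>x. h x * (\<Prod>i<Suc m. g i (x (Suc i) + 1) - g i (x (Suc i))))"
    by (simp add: h'_def prod.lessThan_Suc algebra_simps)
  finally show ?case .
qed

lemma Dm_prod1: "Dm m (\<lambda>x. \<Prod>i<m. g i (x (Suc i))) = (\<lambda>x. \<Prod>i<m. g i (x (Suc i) + 1) - g i (x (Suc i)))"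
  using Dm_prod[of m "\<lambda>x. 1" g] by simp

lemma Dm_det: "Dm m (\<lambda>x. det (gmat m 0 Suc x)) = (\<lambda>x. det (gmat m 0 id x))"
proof -
  define P where "P = {p. p permutes {0..<m}}"
  define F where "F p x = (\<Prod>i<m. x (Suc i) gchoose Suc (p i))" for p and x :: "nat \<Rightarrow> complex"
  have L: "linop (Dm m)" using SIL_Dm by (simp add: SIL_def)
  have e1: "(\<lambda>x. det (gmat m 0 Suc x)) = (\<lambda>x. \<Sum>p\<in>P. of_int (sign p) * F p x)"
    by (rule ext) (simp add: det_gmat P_def F_def atLeast0LessThan)
  have "Dm m (\<lambda>x. \<Sum>p\<in>P. of_int (sign p) * F p x) = (\<lambda>x. \<Sum>p\<in>P. Dm m (\<lambda>x. of_int (sign p) * F p x) x)"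
    by (rule linop_sum[OF L])
  also have "\<dots> = (\<lambda>x. \<Sum>p\<in>P. of_int (sign p) * Dm m (F p) x)"
    by (simp only: linop_cmult[OF L])
  also have "\<dots> = (\<lambda>x. \<Sum>p\<in>P. of_int (sign p) * (\<Prod>i<m. x (Suc i) gchoose p i))"
  proof -
    have "Dm m (F p) = (\<lambda>x. \<Prod>i<m. x (Suc i) gchoose p i)" for p
    proof -
      have "Dm m (F p) = (\<lambda>x. \<Prod>i<m. ((x (Suc i) + 1) gchoose Suc (p i)) - (x (Suc i) gchoose Suc (p i)))"
        unfolding F_def by (rule Dm_prod1)
      also have "\<dots> = (\<lambda>x. \<Prod>i<m. x (Suc i) gchoose p i)"
        by (simp add: gbinomial_Suc_Suc)
      finally show ?thesis .
    qed
    then show ?thesis by simp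
  qed
  also have "\<dots> = (\<lambda>x. det (gmat m 0 id x))"
    by (rule ext) (simp add: det_gmat P_def atLeast0LessThan)
  finally show ?thesis using e1 by simp
qed

definition sw :: "nat \<Rightarrow> nat \<Rightarrow> nat" where
  "sw i k = (if k = i then Suc i else if k = Suc i then i else k)"

lemma sw_sw[simp]: "sw i (sw i k) = k"
  by (simp add: sw_def)

lemma inj_sw: "inj (sw i)"
  by (metis injI sw_sw)

lemma gmat_sw:
  assumes "1 \<le> i" "i < m"
  shows "gmat m c e (x \<circ> sw i) = swaprows (i - 1) i (gmat m c e x)"
proof (rule eq_matI)
  fix r j assume "r < dim_row (swaprows (i - 1) i (gmat m c e x))" "j < dim_col (swaprows (i - 1) i (gmat m c e x))"
  then have rj: "r < m" "j < m" by (auto simp: gmat_def)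
  have i1: "i - 1 < m" using assms by simp
  show "gmat m c e (x \<circ> sw i) $$ (r, j) = swaprows (i - 1) i (gmat m c e x) $$ (r, j)"
    using rj assms i1 by (auto simp: gmat_def sw_def)
qed (auto simp: gmat_def)

lemma det_gmat_sw:
  assumes "1 \<le> i" "i < m"
  shows "det (gmat m c e (x \<circ> sw i)) = - det (gmat m c e x)"
  unfolding gmat_sw[OF assms] using assms by (intro det_swaprows) auto


definition ci :: "(nat \<Rightarrow> int) \<Rightarrow> nat \<Rightarrow> complex" where
  "ci l = (\<lambda>j. of_int (l j))"

definition Lset :: "nat \<Rightarrow> (nat \<Rightarrow> int) \<Rightarrow> (nat \<Rightarrow> int) set" where
  "Lset m k = {l. (\<forall>j. (j = 0 \<or> m < j) \<longrightarrow> l j = 0) \<and>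
      (\<forall>j. 1 \<le> j \<longrightarrow> j \<le> m \<longrightarrow> k j \<le> l j \<and> l j \<le> k (Suc j)) \<and>
      (\<forall>j. 1 \<le> j \<longrightarrow> j < m \<longrightarrow> l j < l (Suc j))}"

definition kcond :: "nat \<Rightarrow> (nat \<Rightarrow> int) \<Rightarrow> bool" where
  "kcond m k \<longleftrightarrow> (\<forall>j. 1 \<le> j \<longrightarrow> j < m \<longrightarrow> k j < k (Suc j)) \<and> (1 \<le> m \<longrightarrow> k m \<le> k (Suc m))"

lemma Lset_0: "Lset 0 k = {\<lambda>_. 0}"
proof -
  have "l \<in> Lset 0 k \<longleftrightarrow> l = (\<lambda>_. 0)" for l
  proof
    assume "l \<in> Lset 0 k"
    then have "l j = 0" for j unfolding Lset_def by (cases j) auto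
    then show "l = (\<lambda>_. 0)" by auto
  qed (auto simp: Lset_def)
  then show ?thesis by auto
qed

lemma kcond_down1: "kcond (Suc m) k \<Longrightarrow> kcond m k"
  unfolding kcond_def by (auto simp: less_imp_le)

lemma kcond_down2: "kcond (Suc m) k \<Longrightarrow> kcond m (k(Suc m := k (Suc m) - 1))"
  unfolding kcond_def by auto

lemma Lset_split:
  assumes "kcond (Suc m) k"
  shows "Lset (Suc m) k =
    (\<lambda>(l, v). l(Suc m := v)) ` (Lset m k \<times> {k (Suc m) + 1 .. k (Suc (Suc m))}) \<union>
    (\<lambda>l. l(Suc m := k (Suc m))) ` Lset m (k(Suc m := k (Suc m) - 1))"
  (is "?L = ?A \<union> ?B")
proof
  show "?L \<subseteq> ?A \<union> ?B"
  proof
    fix l assume l: "l \<in> ?L"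
    define l' where "l' = l(Suc m := 0)"
    have l_eq: "l = l'(Suc m := l (Suc m))" by (simp add: l'_def)
    have z: "\<forall>j. (j = 0 \<or> Suc m < j) \<longrightarrow> l j = 0"
      and b: "\<forall>j. 1 \<le> j \<longrightarrow> j \<le> Suc m \<longrightarrow> k j \<le> l j \<and> l j \<le> k (Suc j)"
      and s: "\<forall>j. 1 \<le> j \<longrightarrow> j < Suc m \<longrightarrow> l j < l (Suc j)"
      using l unfolding Lset_def by auto
    have z': "\<forall>j. (j = 0 \<or> m < j) \<longrightarrow> l' j = 0"
      using z by (auto simp: l'_def)
    show "l \<in> ?A \<union> ?B"
    proof (cases "l (Suc m) > k (Suc m)")
      case True
      have "l' \<in> Lset m k" unfolding Lset_def using z' b s by (auto simp: l'_def)
      moreover have "l (Suc m) \<in> {k (Suc m) + 1 .. k (Suc (Suc m))}" using True b by auto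
      ultimately show ?thesis using l_eq by (intro UnI1) (auto intro!: image_eqI[of _ _ "(l', l (Suc m))"])
    next
      case False
      then have lk: "l (Suc m) = k (Suc m)" using b by force
      have "l' \<in> Lset m (k(Suc m := k (Suc m) - 1))"
        unfolding Lset_def
      proof (intro CollectI conjI allI impI)
        fix j assume j: "1 \<le> j" "j \<le> m"
        show "(k(Suc m := k (Suc m) - 1)) j \<le> l' j" using b j by (auto simp: l'_def)
        show "l' j \<le> (k(Suc m := k (Suc m) - 1)) (Suc j)"
        proof (cases "j = m")
          case True
          then have "l m < l (Suc m)" using s j by auto
          then show ?thesis using True lk j by (auto simp: l'_def)
        next
          case False
          then show ?thesis using b j by (auto simp: l'_def)
        qed
      qed (use z' s in \<open>auto simp: l'_def\<close>)
      then show ?thesis using l_eq lk by (intro UnI2) auto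
    qed
  qed
next
  show "?A \<union> ?B \<subseteq> ?L"
  proof
    fix l assume "l \<in> ?A \<union> ?B"
    then show "l \<in> ?L"
    proof
      assume "l \<in> ?A"
      then obtain l' v where l: "l = l'(Suc m := v)" and l': "l' \<in> Lset m k"
        and v: "v \<in> {k (Suc m) + 1 .. k (Suc (Suc m))}" by auto
      have z: "\<forall>j. (j = 0 \<or> m < j) \<longrightarrow> l' j = 0"
        and b: "\<forall>j. 1 \<le> j \<longrightarrow> j \<le> m \<longrightarrow> k j \<le> l' j \<and> l' j \<le> k (Suc j)"
        and s: "\<forall>j. 1 \<le> j \<longrightarrow> j < m \<longrightarrow> l' j < l' (Suc j)"
        using l' unfolding Lset_def by auto
      show "l \<in> ?L" unfolding Lset_def l
      proof (intro CollectI conjI allI impI)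
        fix j assume j: "1 \<le> j" "j < Suc m"
        show "(l'(Suc m := v)) j < (l'(Suc m := v)) (Suc j)"
        proof (cases "j = m")
          case True then show ?thesis using b v j by fastforce
        next
          case False then show ?thesis using s j by auto
        qed
      qed (use z b v in auto)
    next
      assume "l \<in> ?B"
      then obtain l' where l: "l = l'(Suc m := k (Suc m))" and l': "l' \<in> Lset m (k(Suc m := k (Suc m) - 1))"
        by auto
      have z: "\<forall>j. (j = 0 \<or> m < j) \<longrightarrow> l' j = 0"
        and b: "\<forall>j. 1 \<le> j \<longrightarrow> j \<le> m \<longrightarrow> (k(Suc m := k (Suc m) - 1)) j \<le> l' j \<and> l' j \<le> (k(Suc m := k (Suc m) - 1)) (Suc j)"
        and s: "\<forall>j. 1 \<le> j \<longrightarrow> j < m \<longrightarrow> l' j < l' (Suc j)"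
        using l' unfolding Lset_def by auto
      have kk: "k (Suc m) \<le> k (Suc (Suc m))" using assms unfolding kcond_def by auto
      show "l \<in> ?L" unfolding Lset_def l
      proof (intro CollectI conjI allI impI)
        fix j assume j: "1 \<le> j" "j < Suc m"
        show "(l'(Suc m := k (Suc m))) j < (l'(Suc m := k (Suc m))) (Suc j)"
        proof (cases "j = m")
          case True then show ?thesis using b j by fastforce
        next
          case False then show ?thesis using s j by auto
        qed
      next
        fix j assume j: "1 \<le> j" "j \<le> Suc m"
        show "k j \<le> (l'(Suc m := k (Suc m))) j"
          using b j by (cases "j = Suc m") auto
      next
        fix j assume j: "1 \<le> j" "j \<le> Suc m"
        show "(l'(Suc m := k (Suc m))) j \<le> k (Suc j)"
        proof (cases "j = Suc m")
          case True then show ?thesis using kk by simp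
        next
          case False
          then have "j \<le> m" using j by simp
          then show ?thesis using b j False by (cases "j = m") auto
        qed
      qed (use z in auto)
    qed
  qed
qed

lemma Lset_zero: "l \<in> Lset m k \<Longrightarrow> m < j \<Longrightarrow> l j = 0"
  unfolding Lset_def by auto

lemma finite_Lset: "kcond m k \<Longrightarrow> finite (Lset m k)"
proof (induction m arbitrary: k)
  case 0 then show ?case by (simp add: Lset_0)
next
  case (Suc m)
  have f1: "finite (Lset m k)" by (rule Suc.IH[OF kcond_down1[OF Suc.prems]])
  have f2: "finite (Lset m (k(Suc m := k (Suc m) - 1)))" by (rule Suc.IH[OF kcond_down2[OF Suc.prems]])
  show ?case unfolding Lset_split[OF Suc.prems]
    by (intro finite_UnI finite_imageI finite_cartesian_product f1 f2 finite_atLeastAtMost_int)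
qed

lemma sum_Lset_split:
  assumes "kcond (Suc m) k"
  shows "(\<Sum>l\<in>Lset (Suc m) k. F l) =
    (\<Sum>l\<in>Lset m k. \<Sum>v\<in>{k (Suc m) + 1 .. k (Suc (Suc m))}. F (l(Suc m := v))) +
    (\<Sum>l\<in>Lset m (k(Suc m := k (Suc m) - 1)). F (l(Suc m := k (Suc m))))"
proof -
  let ?A = "(\<lambda>(l, v). l(Suc m := v)) ` (Lset m k \<times> {k (Suc m) + 1 .. k (Suc (Suc m))})"
  let ?B = "(\<lambda>l. l(Suc m := k (Suc m))) ` Lset m (k(Suc m := k (Suc m) - 1))"
  have f1: "finite (Lset m k)" by (rule finite_Lset[OF kcond_down1[OF assms]])
  have f2: "finite (Lset m (k(Suc m := k (Suc m) - 1)))" by (rule finite_Lset[OF kcond_down2[OF assms]])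
  have inj1: "inj_on (\<lambda>(l, v). l(Suc m := v)) (Lset m k \<times> {k (Suc m) + 1 .. k (Suc (Suc m))})"
  proof (rule inj_onI, clarify)
    fix l v l' v' assume a: "l \<in> Lset m k" "l' \<in> Lset m k" "l(Suc m := v) = l'(Suc m := v')"
    have "v = v'" using fun_cong[OF a(3), of "Suc m"] by simp
    moreover have "l = l'"
    proof
      fix j show "l j = l' j"
      proof (cases "j = Suc m")
        case True then show ?thesis using Lset_zero[OF a(1)] Lset_zero[OF a(2)] by simp
      next
        case False then show ?thesis using fun_cong[OF a(3), of j] by simp
      qed
    qed
    ultimately show "l = l' \<and> v = v'" by simp
  qed
  have inj2: "inj_on (\<lambda>l. l(Suc m := k (Suc m))) (Lset m (k(Suc m := k (Suc m) - 1)))"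
  proof (rule inj_onI)
    fix l l' assume a: "l \<in> Lset m (k(Suc m := k (Suc m) - 1))" "l' \<in> Lset m (k(Suc m := k (Suc m) - 1))"
      "l(Suc m := k (Suc m)) = l'(Suc m := k (Suc m))"
    show "l = l'"
    proof
      fix j show "l j = l' j"
      proof (cases "j = Suc m")
        case True then show ?thesis using Lset_zero[OF a(1)] Lset_zero[OF a(2)] by simp
      next
        case False then show ?thesis using fun_cong[OF a(3), of j] by simp
      qed
    qed
  qed
  have disj: "?A \<inter> ?B = {}"
  proof (rule equals0I)
    fix l assume "l \<in> ?A \<inter> ?B"
    then have lA: "l \<in> ?A" and lB: "l \<in> ?B" by auto
    from lA have "l (Suc m) \<ge> k (Suc m) + 1" by auto
    moreover from lB have "l (Suc m) = k (Suc m)" by auto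
    ultimately show False by simp
  qed
  have "(\<Sum>l\<in>Lset (Suc m) k. F l) = (\<Sum>l\<in>?A. F l) + (\<Sum>l\<in>?B. F l)"
    unfolding Lset_split[OF assms] using f1 f2 disj by (intro sum.union_disjoint) auto
  also have "(\<Sum>l\<in>?A. F l) = (\<Sum>(l, v)\<in>Lset m k \<times> {k (Suc m) + 1 .. k (Suc (Suc m))}. F (l(Suc m := v)))"
    by (subst sum.reindex[OF inj1]) (simp add: case_prod_beta comp_def)
  also have "\<dots> = (\<Sum>l\<in>Lset m k. \<Sum>v\<in>{k (Suc m) + 1 .. k (Suc (Suc m))}. F (l(Suc m := v)))"
    by (rule sum.cartesian_product[symmetric])
  also have "(\<Sum>l\<in>?B. F l) = (\<Sum>l\<in>Lset m (k(Suc m := k (Suc m) - 1)). F (l(Suc m := k (Suc m))))"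
    by (subst sum.reindex[OF inj2]) (simp add: comp_def)
  finally show ?thesis .
qed


definition pt :: "nat \<Rightarrow> (nat \<Rightarrow> int) \<Rightarrow> nat \<Rightarrow> int" where
  "pt t k = (\<lambda>j. if j \<le> t then k j else k (Suc j) + 1)"

definition Hcond :: "nat \<Rightarrow> fn \<Rightarrow> bool" where
  "Hcond m G \<longleftrightarrow> (\<forall>i x. 1 \<le> i \<longrightarrow> i < m \<longrightarrow> x i = x (Suc i) \<longrightarrow> Wop i (Suc i) G x = 0)"

lemma ci_upd: "ci (l(j := v)) = (ci l)(j := of_int v)"
  by (auto simp: ci_def)

lemma Dm_fix: "m < M \<Longrightarrow> Dm m H (x(M := c)) = Dm m (\<lambda>y. H (y(M := c))) x"
proof (induction m arbitrary: H x)
  case 0 then show ?case by simp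
next
  case (Suc m)
  have e: "(\<lambda>y. diffD (Suc m) H (y(M := c))) = diffD (Suc m) (\<lambda>y. H (y(M := c)))"
    using Suc.prems by (auto simp: diffD_def shiftE_def fun_upd_twist)
  have "Dm (Suc m) H (x(M := c)) = Dm m (diffD (Suc m) H) (x(M := c))" by simp
  also have "\<dots> = Dm m (\<lambda>y. diffD (Suc m) H (y(M := c))) x" by (rule Suc.IH) (use Suc.prems in simp)
  also have "\<dots> = Dm (Suc m) (\<lambda>y. H (y(M := c))) x" by (simp add: e)
  finally show ?case .
qed

lemma tele_int:
  fixes f :: "int \<Rightarrow> complex"
  assumes "a \<le> b + 1"
  shows "(\<Sum>v\<in>{a..b}. f (v + 1) - f v) = f (b + 1) - f a"
proof -
  have "(\<Sum>v\<in>{a..a + int n - 1}. f (v + 1) - f v) = f (a + int n) - f a" for n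
  proof (induction n)
    case 0 then show ?case by simp
  next
    case (Suc n)
    have "{a..a + int (Suc n) - 1} = insert (a + int n) {a..a + int n - 1}" by auto
    then show ?case using Suc by (simp add: algebra_simps)
  qed
  from this[of "nat (b + 1 - a)"] show ?thesis using assms by simp
qed

lemma Hcond_fix:
  assumes "Hcond (Suc m) G"
  shows "Hcond m (\<lambda>x. diffD (Suc m) G (x(Suc m := c)))"
  unfolding Hcond_def
proof (intro allI impI)
  fix i and x :: "nat \<Rightarrow> complex" assume i: "1 \<le> i" "i < m" and xi: "x i = x (Suc i)"
  let ?M = "Suc m"
  let ?z = "x(?M := c)"
  have W0: "Wop i (Suc i) G y = 0" if "y i = y (Suc i)" for y
    using assms i that unfolding Hcond_def by auto
  have "Wop i (Suc i) (\<lambda>x. diffD ?M G (x(?M := c))) x =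
      Wop i (Suc i) G (?z(?M := c + 1)) - Wop i (Suc i) G ?z"
    using i by (simp add: Wop_def diffD_def shiftE_def fun_upd_twist algebra_simps)
  also have "\<dots> = 0" using W0[of "?z(?M := c + 1)"] W0[of ?z] i xi by simp
  finally show "Wop i (Suc i) (\<lambda>x. diffD ?M G (x(?M := c))) x = 0" .
qed

lemma dep_fix:
  assumes "dep (Suc m) G"
  shows "dep m (\<lambda>x. diffD (Suc m) G (x(Suc m := c)))"
proof -
  have d: "dep (Suc m) (diffD (Suc m) G)" by (rule dep_diffD[OF assms])
  show ?thesis unfolding dep_def
  proof (intro allI impI)
    fix x y :: "nat \<Rightarrow> complex" assume "\<forall>i\<in>{1..m}. x i = y i"
    then have "\<forall>i\<in>{1..Suc m}. (x(Suc m := c)) i = (y(Suc m := c)) i" by auto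
    then show "diffD (Suc m) G (x(Suc m := c)) = diffD (Suc m) G (y(Suc m := c))"
      using d unfolding dep_def by blast
  qed
qed


lemma lemmaA:
  assumes "kcond m k" "dep m G" "Hcond m G"
  shows "(\<Sum>l\<in>Lset m k. Dm m G (ci l)) = (\<Sum>t\<le>m. (-1)^t * G (ci (pt t k)))"
  using assms
proof (induction m arbitrary: G k)
  case 0
  have "G (ci (\<lambda>_. 0)) = G (ci (pt 0 k))" using "0.prems"(2) unfolding dep_def by simp
  then show ?case by (simp add: Lset_0)
next
  case (Suc m)
  define M where "M = Suc m"
  define k' where "k' = k(M := k M - 1)"
  define I where "I = {k M + 1 .. k (Suc M)}"
  define Gv where "Gv v = (\<lambda>x. diffD M G (x(M := of_int v)))" for v :: int
  define a where "a = (of_int (k M) :: complex)"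
  define P where "P t = ci (pt t k)" for t
  define Q where "Q t = ci (pt t k')" for t
  have kc1: "kcond m k" using kcond_down1[OF Suc.prems(1)] .
  have kc2: "kcond m k'" using kcond_down2[OF Suc.prems(1)] unfolding k'_def M_def .
  have dGv: "dep m (Gv v)" for v unfolding Gv_def M_def by (rule dep_fix[OF Suc.prems(2)])
  have hGv: "Hcond m (Gv v)" for v unfolding Gv_def M_def by (rule Hcond_fix[OF Suc.prems(3)])
  have kMle: "k M \<le> k (Suc M)" using Suc.prems(1) unfolding kcond_def M_def by auto
  have DmGv: "Dm M G (ci (l(M := v))) = Dm m (Gv v) (ci l)" for l v
  proof -
    have "Dm M G (ci (l(M := v))) = Dm m (diffD M G) ((ci l)(M := of_int v))"
      by (simp add: M_def ci_upd)
    also have "\<dots> = Dm m (Gv v) (ci l)" unfolding Gv_def by (rule Dm_fix) (simp add: M_def)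
    finally show ?thesis .
  qed
  have Gv_eval: "Gv v z = G (z(M := of_int v + 1)) - G (z(M := of_int v))" for v z
    by (simp add: Gv_def diffD_def shiftE_def)
  have S1: "(\<Sum>l\<in>Lset m k. \<Sum>v\<in>I. Dm M G (ci (l(M := v)))) =
      (\<Sum>t\<le>m. (-1)^t * (G (P t) - G ((P t)(M := a + 1))))"
  proof -
    have "(\<Sum>l\<in>Lset m k. \<Sum>v\<in>I. Dm M G (ci (l(M := v)))) = (\<Sum>v\<in>I. \<Sum>l\<in>Lset m k. Dm m (Gv v) (ci l))"
      unfolding DmGv by (rule sum.swap)
    also have "\<dots> = (\<Sum>v\<in>I. \<Sum>t\<le>m. (-1)^t * Gv v (P t))"
      unfolding P_def using Suc.IH[OF kc1 dGv hGv] by simp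
    also have "\<dots> = (\<Sum>t\<le>m. (-1)^t * (\<Sum>v\<in>I. Gv v (P t)))"
      by (simp add: sum.swap[of _ I] sum_distrib_left)
    also have "\<dots> = (\<Sum>t\<le>m. (-1)^t * (G (P t) - G ((P t)(M := a + 1))))"
    proof (rule sum.cong[OF refl])
      fix t assume "t \<in> {..m}"
      then have t: "t \<le> m" by simp
      have "(\<Sum>v\<in>I. Gv v (P t)) = (\<Sum>v\<in>I. G ((P t)(M := of_int (v + 1))) - G ((P t)(M := of_int v)))"
        by (simp add: Gv_eval)
      also have "\<dots> = G ((P t)(M := of_int (k (Suc M) + 1))) - G ((P t)(M := of_int (k M + 1)))"
        unfolding I_def using tele_int[of "k M + 1" "k (Suc M)" "\<lambda>v. G ((P t)(M := of_int v))"] kMle by simp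
      also have "(P t)(M := of_int (k (Suc M) + 1)) = P t"
        using t by (auto simp: P_def ci_def pt_def M_def)
      also have "of_int (k M + 1) = a + 1" by (simp add: a_def)
      finally have X: "(\<Sum>v\<in>I. Gv v (P t)) = G (P t) - G ((P t)(M := a + 1))" .
      show "(-1)^t * (\<Sum>v\<in>I. Gv v (P t)) = (-1)^t * (G (P t) - G ((P t)(M := a + 1)))"
        by (simp only: X)
    qed
    finally show ?thesis .
  qed
  have S2: "(\<Sum>l\<in>Lset m k'. Dm M G (ci (l(M := k M)))) =
      (\<Sum>t\<le>m. (-1)^t * (G ((Q t)(M := a + 1)) - G ((Q t)(M := a))))"
  proof -
    have "(\<Sum>l\<in>Lset m k'. Dm M G (ci (l(M := k M)))) = (\<Sum>l\<in>Lset m k'. Dm m (Gv (k M)) (ci l))"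
      unfolding DmGv ..
    also have "\<dots> = (\<Sum>t\<le>m. (-1)^t * Gv (k M) (Q t))"
      unfolding Q_def using Suc.IH[OF kc2 dGv hGv] by simp
    also have "\<dots> = (\<Sum>t\<le>m. (-1)^t * (G ((Q t)(M := a + 1)) - G ((Q t)(M := a))))"
      by (simp add: Gv_eval a_def)
    finally show ?thesis .
  qed
  have QP: "Q m = P m"
    by (auto simp: Q_def P_def ci_def pt_def k'_def M_def)
  have f3: "G ((Q t)(M := a + 1)) - G ((Q t)(M := a)) - G ((P t)(M := a + 1)) = 0" if t: "t < m" for t
  proof -
    define z where "z = (Q t)(M := a)"
    have m1: "1 \<le> m" "m < Suc m" using t by auto
    have zm: "z m = a" using t by (simp add: z_def Q_def ci_def pt_def k'_def M_def a_def)
    have zM: "z (Suc m) = a" by (simp add: z_def M_def)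
    have W: "Wop m (Suc m) G z = 0" using Suc.prems(3) m1 zm zM unfolding Hcond_def by auto
    have e1: "(z(M := a + 1))(m := a + 1) = (P t)(M := a + 1)"
    proof
      fix j
      show "((z(M := a + 1))(m := a + 1)) j = ((P t)(M := a + 1)) j"
        using t by (auto simp: z_def Q_def P_def ci_def pt_def k'_def M_def a_def)
    qed
    have e2: "z(M := a + 1) = (Q t)(M := a + 1)" by (simp add: z_def)
    have "Wop m (Suc m) G z = G z + G ((z(M := a + 1))(m := a + 1)) - G (z(M := a + 1))"
      using zm zM by (simp add: Wop_def diffD_def shiftE_def M_def)
    then have "G z + G ((P t)(M := a + 1)) - G ((Q t)(M := a + 1)) = 0" using W e1 e2 by simp
    then show ?thesis by (simp add: z_def algebra_simps)
  qed
  have f4: "G ((P m)(M := a)) = G (ci (pt (Suc m) k))"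
  proof -
    have "\<forall>i\<in>{1..Suc m}. ((P m)(M := a)) i = ci (pt (Suc m) k) i"
      by (auto simp: P_def ci_def pt_def M_def a_def)
    then show ?thesis using Suc.prems(2) unfolding dep_def by blast
  qed
  have "(\<Sum>l\<in>Lset (Suc m) k. Dm (Suc m) G (ci l)) =
      (\<Sum>l\<in>Lset m k. \<Sum>v\<in>I. Dm M G (ci (l(M := v)))) + (\<Sum>l\<in>Lset m k'. Dm M G (ci (l(M := k M))))"
    unfolding M_def I_def k'_def by (rule sum_Lset_split[OF Suc.prems(1)])
  also have "\<dots> = (\<Sum>t\<le>m. (-1)^t * G (P t)) +
      (\<Sum>t\<le>m. (-1)^t * (G ((Q t)(M := a + 1)) - G ((Q t)(M := a)) - G ((P t)(M := a + 1))))"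
    unfolding S1 S2 by (simp add: sum.distrib[symmetric] algebra_simps)
  also have "(\<Sum>t\<le>m. (-1)^t * (G ((Q t)(M := a + 1)) - G ((Q t)(M := a)) - G ((P t)(M := a + 1)))) =
      (\<Sum>t<m. (-1)^t * (G ((Q t)(M := a + 1)) - G ((Q t)(M := a)) - G ((P t)(M := a + 1)))) +
      (-1)^m * (G ((Q m)(M := a + 1)) - G ((Q m)(M := a)) - G ((P m)(M := a + 1)))"
    by (simp add: lessThan_Suc_atMost[symmetric])
  also have "(\<Sum>t<m. (-1)^t * (G ((Q t)(M := a + 1)) - G ((Q t)(M := a)) - G ((P t)(M := a + 1)))) = 0"
    by (rule sum.neutral) (simp add: f3)
  also have "(-1)^m * (G ((Q m)(M := a + 1)) - G ((Q m)(M := a)) - G ((P m)(M := a + 1))) =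
      (-1)^(Suc m) * G (ci (pt (Suc m) k))"
    using f4 by (simp add: QP)
  also have "(\<Sum>t\<le>m. (-1)^t * G (P t)) + (0 + (-1)^(Suc m) * G (ci (pt (Suc m) k))) =
      (\<Sum>t\<le>Suc m. (-1)^t * G (ci (pt t k)))"
    by (simp add: P_def)
  finally show ?case .
qed


lemma good_ren:
  assumes "inj \<rho>" "good M g" "M \<ge> 1"
  shows "good M (ren \<rho> g)"
  unfolding good_def
proof
  fix p
  show "nilp p M (ren \<rho> g)"
  proof (cases "p \<in> range \<rho>")
    case True
    then obtain r where p: "p = \<rho> r" by auto
    have "(diffD p ^^ M) (ren \<rho> g) = ren \<rho> ((diffD r ^^ M) g)"
      unfolding p by (rule diffD_pow_ren[OF assms(1)])
    also have "\<dots> = ren \<rho> (\<lambda>x. 0)" using assms(2) by (simp add: good_def nilp_def)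
    finally show ?thesis by (simp add: nilp_def ren_def)
  next
    case False
    have "diffD p (ren \<rho> g) = (\<lambda>x. 0)"
      using shiftE_ren_out[OF False] by (simp add: diffD_def)
    then have "nilp p (Suc 0) (ren \<rho> g)" by (rule nilp_const)
    then show ?thesis using nilp_mono assms(3) by simp
  qed
qed

lemma SIL_Sh_comm: "SIL L \<Longrightarrow> L (Sh ps f) = Sh ps (L f)"
  by (induction ps arbitrary: f) (auto simp: Sh_Cons SIL_def)

lemma Ops_Sh_comm: "Ops M ps (Sh qs f) = Sh qs (Ops M ps f)"
  by (rule SIL_Sh_comm[OF SIL_Ops])

lemma Dm_Ops_comm: "Dm m (Ops M ps f) = Ops M ps (Dm m f)"
proof (induction ps)
  case Nil then show ?case by simp
next
  case (Cons a ps)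
  show ?case using Cons SIL_Rsum_comm[OF SIL_Dm] by (simp add: Ops_Cons)
qed

lemma gmat_cong:
  assumes "\<forall>i\<in>{1..m}. x i = y i"
  shows "gmat m c e x = gmat m c e y"
  unfolding gmat_def using assms by (intro eq_matI) auto

lemma dep_U: "dep m (\<lambda>x. det (gmat m c e x))"
  unfolding dep_def using gmat_cong by metis

lemma set_remove_pairs: "set (remove1 a (pairs m)) = set (pairs m) - {a}"
  using distinct_pairs by (simp add: set_remove1_eq)

lemma mset_sw_pairs:
  assumes "1 \<le> i" "i < m"
  shows "mset (map (\<lambda>(p, q). (sw i p, sw i q)) (remove1 (i, Suc i) (pairs m))) = mset (remove1 (i, Suc i) (pairs m))"
proof -
  let ?f = "\<lambda>(p, q). (sw i p, sw i q)"
  let ?R = "remove1 (i, Suc i) (pairs m)"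
  have injf: "inj ?f" by (auto simp: inj_def inj_eq[OF inj_sw])
  have dR: "distinct ?R" using distinct_pairs by simp
  have "inj_on ?f (set ?R)" using injf by (rule inj_on_subset) simp
  then have d2: "distinct (map ?f ?R)" using dR by (simp add: distinct_map)
  have sub: "?f ` set ?R \<subseteq> set ?R" for R
  proof
    fix y assume "y \<in> ?f ` set ?R"
    then obtain p q where y: "y = (sw i p, sw i q)" and pq: "(p, q) \<in> set ?R" by auto
    then have "1 \<le> p" "p < q" "q \<le> m" "(p, q) \<noteq> (i, Suc i)"
      unfolding set_remove_pairs set_pairs by auto
    then show "y \<in> set ?R" unfolding y set_remove_pairs set_pairs using assms
      by (auto simp: sw_def)
  qed
  have "set ?R \<subseteq> ?f ` set ?R"
  proof
    fix y assume y: "y \<in> set ?R"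
    obtain p q where pq: "y = (p, q)" by (cases y)
    have "?f (p, q) \<in> set ?R" using sub y pq by blast
    moreover have "?f (?f (p, q)) = (p, q)" by simp
    ultimately show "y \<in> ?f ` set ?R" using pq by (metis image_eqI)
  qed
  then have "set (map ?f ?R) = set ?R" using sub by auto
  then show ?thesis using set_eq_iff_mset_eq_distinct[OF d2 dR] by simp
qed

lemma Hcond_G:
  assumes "good M (\<lambda>x. det (gmat m 0 Suc x))"
  shows "Hcond m (Ops M (pairs m) (\<lambda>x. det (gmat m 0 Suc x)))"
  unfolding Hcond_def
proof (intro allI impI)
  fix i and x :: "nat \<Rightarrow> complex"
  assume i: "1 \<le> i" "i < m" and xi: "x i = x (Suc i)"
  let ?U = "\<lambda>x. det (gmat m 0 Suc x)"
  let ?R = "remove1 (i, Suc i) (pairs m)"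
  let ?F = "Ops M ?R ?U"
  have mem: "(i, Suc i) \<in> set (pairs m)" using i by (simp add: set_pairs)
  have W: "Wop i (Suc i) (Ops M (pairs m) ?U) = ?F" by (rule Wop_Ops[OF assms mem])
  have rU: "ren (sw i) ?U = (\<lambda>x. (-1) * ?U x)"
    by (rule ext) (simp add: ren_def det_gmat_sw[OF i])
  have L: "linop (Ops M (map (\<lambda>(p, q). (sw i p, sw i q)) ?R))" using SIL_Ops by (simp add: SIL_def)
  have "ren (sw i) ?F = Ops M (map (\<lambda>(p, q). (sw i p, sw i q)) ?R) (ren (sw i) ?U)"
    by (rule Ops_ren[OF inj_sw, symmetric])
  also have "\<dots> = (\<lambda>x. (-1) * Ops M (map (\<lambda>(p, q). (sw i p, sw i q)) ?R) ?U x)"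
    unfolding rU by (rule linop_cmult[OF L])
  also have "Ops M (map (\<lambda>(p, q). (sw i p, sw i q)) ?R) ?U = ?F"
    by (rule Ops_mset[OF mset_sw_pairs[OF i]])
  finally have rF: "ren (sw i) ?F = (\<lambda>x. - ?F x)" by simp
  have "x \<circ> sw i = x" using xi by (auto simp: sw_def)
  then have "?F x = - ?F x" using fun_cong[OF rF, of x] by (simp add: ren_def)
  then have "?F x = 0" by simp
  then show "Wop i (Suc i) (Ops M (pairs m) ?U) x = 0" using W by simp
qed


lemma skip_less_iff: "skip s p < skip s q \<longleftrightarrow> p < q"
  by (auto simp: skip_def)

lemma skip_ne: "skip s j \<noteq> s"
  by (auto simp: skip_def)

lemma skip_inv: "p \<noteq> s \<Longrightarrow> skip s (if p < s then p else p - 1) = p"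
  by (auto simp: skip_def)

lemma pairs_split_mset:
  assumes s: "1 \<le> s" "s \<le> Suc m"
  shows "mset (pairs (Suc m)) = mset (map (\<lambda>p. (p, s)) [1..<s] @ map (\<lambda>q. (s, q)) [Suc s..<Suc (Suc m)] @
            map (\<lambda>(p, q). (skip s p, skip s q)) (pairs m))"
proof -
  let ?A = "map (\<lambda>p. (p, s)) [1..<s]"
  let ?B = "map (\<lambda>q. (s, q)) [Suc s..<Suc (Suc m)]"
  let ?f = "\<lambda>(p, q). (skip s p, skip s q)"
  let ?C = "map ?f (pairs m)"
  have injf: "inj ?f" using inj_skip by (auto simp: inj_def inj_eq)
  have dA: "distinct ?A" by (simp add: distinct_map inj_on_def)
  have dB: "distinct ?B" by (simp add: distinct_map inj_on_def)
  have "inj_on ?f (set (pairs m))" using injf by (rule inj_on_subset) simp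
  then have dC: "distinct ?C" using distinct_pairs by (simp add: distinct_map)
  have setC: "set ?C = {(skip s p, skip s q) | p q. 1 \<le> p \<and> p < q \<and> q \<le> m}"
    by (auto simp: set_pairs)
  have AB: "set ?A \<inter> set ?B = {}" by auto
  have AC: "set ?A \<inter> set ?C = {}" unfolding setC by (auto simp: skip_def)
  have BC: "set ?B \<inter> set ?C = {}" unfolding setC by (auto simp: skip_def)
  have d: "distinct (?A @ ?B @ ?C)"
    unfolding distinct_append set_append using dA dB dC AB AC BC by blast
  have "set (pairs (Suc m)) = set (?A @ ?B @ ?C)"
  proof
    show "set (?A @ ?B @ ?C) \<subseteq> set (pairs (Suc m))"
    proof
      fix y assume "y \<in> set (?A @ ?B @ ?C)"
      then consider "y \<in> set ?A" | "y \<in> set ?B" | "y \<in> set ?C" unfolding set_append by blast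
      then show "y \<in> set (pairs (Suc m))"
      proof cases
        case 1 then show ?thesis using s by (auto simp: set_pairs)
      next
        case 2 then show ?thesis using s by (auto simp: set_pairs)
      next
        case 3
        then obtain p q where y: "y = (skip s p, skip s q)" "1 \<le> p" "p < q" "q \<le> m"
          unfolding setC by auto
        then show ?thesis by (auto simp: set_pairs skip_def)
      qed
    qed
    show "set (pairs (Suc m)) \<subseteq> set (?A @ ?B @ ?C)"
    proof
      fix y assume "y \<in> set (pairs (Suc m))"
      then obtain p q where y: "y = (p, q)" "1 \<le> p" "p < q" "q \<le> Suc m" by (auto simp: set_pairs)
      show "y \<in> set (?A @ ?B @ ?C)"
      proof (cases "q = s \<or> p = s")
        case True then show ?thesis using y by auto
      next
        case False
        define p' where "p' = (if p < s then p else p - 1)"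
        define q' where "q' = (if q < s then q else q - 1)"
        have "skip s p' = p" "skip s q' = q" using False skip_inv unfolding p'_def q'_def by auto
        moreover have "1 \<le> p'" "p' < q'" "q' \<le> m" using y False s unfolding p'_def q'_def by auto
        ultimately have "y \<in> set ?C" unfolding setC using y by blast
        then show ?thesis by simp
      qed
    qed
  qed
  then show ?thesis using set_eq_iff_mset_eq_distinct[OF distinct_pairs d] by simp
qed

lemma Kskip:
  assumes s: "1 \<le> s" "s \<le> Suc m" and g: "good M f" and M: "M \<ge> 1"
  shows "Ops M (pairs (Suc m)) (ren (skip s) f) y =
    Ops M (pairs m) f ((\<lambda>i. y i - (if i \<in> set [1..<s] then 1 else 0)) \<circ> skip s)"
proof -
  let ?A = "map (\<lambda>p. (p, s)) [1..<s]"
  let ?B = "map (\<lambda>q. (s, q)) [Suc s..<Suc (Suc m)]"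
  let ?C = "map (\<lambda>(p, q). (skip s p, skip s q)) (pairs m)"
  define h where "h = ren (skip s) (Ops M (pairs m) f)"
  have "Ops M (pairs (Suc m)) (ren (skip s) f) = Ops M (?A @ ?B @ ?C) (ren (skip s) f)"
    by (rule Ops_mset[OF pairs_split_mset[OF s]])
  also have "\<dots> = Ops M ?A (Ops M ?B (Ops M ?C (ren (skip s) f)))" by (simp add: Ops_append)
  also have "Ops M ?C (ren (skip s) f) = h" unfolding h_def by (rule Ops_ren[OF inj_skip])
  also have hs: "shiftE s h = h" unfolding h_def by (rule shiftE_ren_out) (auto simp: skip_def)
  have "Ops M ?B h = h" by (rule Ops_const_var[OF M hs]) auto
  finally have Z: "Ops M (pairs (Suc m)) (ren (skip s) f) = Ops M ?A h" .
  have gh: "good M h" unfolding h_def by (rule good_ren[OF inj_skip good_Ops[OF g] M])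
  have Sh: "Sh [1..<s] (Ops M ?A h) = h" by (rule Sh_Ops_inv[OF _ hs gh]) simp
  define e where "e i = (if i \<in> set [1..<s] then 1 else (0::complex))" for i
  have "Ops M ?A h y = Sh [1..<s] (Ops M ?A h) (\<lambda>i. y i - e i)"
    by (simp add: Sh_apply e_def)
  also have "\<dots> = h (\<lambda>i. y i - e i)" by (simp only: Sh)
  finally show ?thesis using Z by (simp add: h_def ren_def e_def)
qed


lemma rhs_eq:
  fixes m :: nat and k :: "nat \<Rightarrow> int"
  defines "M \<equiv> Suc (Suc m) * Suc m + 1"
  defines "G \<equiv> Ops M (pairs m) (\<lambda>x. det (gmat m 0 Suc x))"
  shows "all_inv_ops (Suc m) (vdm_poly (Suc m)) (ci k) = (\<Sum>t\<le>m. (-1)^t * G (ci (pt t k)))"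
proof -
  let ?U0 = "\<lambda>x. det (gmat m 0 Suc x)"
  let ?U1 = "\<lambda>x. det (gmat m 1 Suc x)"
  let ?V = "vdm_poly (Suc m)"
  have M1: "M \<ge> 1" by (simp add: M_def)
  have Vdet: "?V = (\<lambda>x. det (gmat (Suc m) 0 id x))" by (rule ext) (simp add: vand)
  have gV: "good M ?V" unfolding Vdet M_def by (rule good_gmat) simp
  have bnd: "Suc m * m + 1 \<le> M" unfolding M_def by (simp add: algebra_simps)
  have gU1: "good M ?U1" by (rule good_mono[OF good_gmat[of m Suc m 1] bnd]) simp
  have depG: "dep m G" unfolding G_def by (rule dep_Ops[OF dep_U])
  have V_lap: "?V = (\<lambda>x. \<Sum>i<Suc m. (-1)^i * ren (skip (Suc i)) ?U1 x)"
    by (rule ext) (simp add: vdm_laplace ren_def)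
  have L: "linop (Ops M (pairs (Suc m)))" using SIL_Ops by (simp add: SIL_def)
  have "all_inv_ops (Suc m) ?V = Ops M (pairs (Suc m)) ?V" by (rule all_inv_ops_Ops[OF gV])
  also have "\<dots> = (\<lambda>x. \<Sum>i<Suc m. Ops M (pairs (Suc m)) (\<lambda>x. (-1)^i * ren (skip (Suc i)) ?U1 x) x)"
    unfolding V_lap by (rule linop_sum[OF L])
  also have "\<dots> = (\<lambda>x. \<Sum>i<Suc m. (-1)^i * Ops M (pairs (Suc m)) (ren (skip (Suc i)) ?U1) x)"
    by (simp only: linop_cmult[OF L])
  finally have A: "all_inv_ops (Suc m) ?V (ci k) =
      (\<Sum>i<Suc m. (-1)^i * Ops M (pairs (Suc m)) (ren (skip (Suc i)) ?U1) (ci k))" by simp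
  have U1Sh: "?U1 = Sh [1..<Suc m] ?U0"
  proof
    fix x
    have "gmat m 0 Suc (\<lambda>i. x i + (if i \<in> set [1..<Suc m] then 1 else 0)) = gmat m 1 Suc x"
      unfolding gmat_def by (intro eq_matI) auto
    then show "?U1 x = Sh [1..<Suc m] ?U0 x" by (simp add: Sh_apply)
  qed
  have tm: "Ops M (pairs (Suc m)) (ren (skip (Suc i)) ?U1) (ci k) = G (ci (pt i k))" if i: "i < Suc m" for i
  proof -
    define z where "z = (\<lambda>j. ci k j - (if j \<in> set [1..<Suc i] then 1 else 0)) \<circ> skip (Suc i)"
    have "Ops M (pairs (Suc m)) (ren (skip (Suc i)) ?U1) (ci k) = Ops M (pairs m) ?U1 z"
      unfolding z_def by (rule Kskip[OF _ _ gU1 M1]) (use i in auto)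
    also have "Ops M (pairs m) ?U1 = Sh [1..<Suc m] G"
      unfolding U1Sh G_def by (rule Ops_Sh_comm)
    also have "Sh [1..<Suc m] G z = G (\<lambda>j. z j + (if j \<in> set [1..<Suc m] then 1 else 0))"
      by (simp add: Sh_apply)
    also have "\<dots> = G (ci (pt i k))"
    proof -
      have "\<forall>j\<in>{1..m}. z j + (if j \<in> set [1..<Suc m] then 1 else 0) = ci (pt i k) j"
        by (auto simp: z_def ci_def pt_def skip_def)
      then show ?thesis using depG unfolding dep_def by (intro depG[unfolded dep_def, rule_format]) simp
    qed
    finally show ?thesis .
  qed
  have "(\<Sum>i<Suc m. (-1)^i * Ops M (pairs (Suc m)) (ren (skip (Suc i)) ?U1) (ci k)) =
      (\<Sum>i<Suc m. (-1)^i * G (ci (pt i k)))"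
    by (rule sum.cong) (auto simp: tm)
  then show ?thesis using A by (simp add: lessThan_Suc_atMost)
qed

lemma lhs_eq:
  fixes m :: nat and k :: "nat \<Rightarrow> int"
  defines "M \<equiv> Suc (Suc m) * Suc m + 1"
  defines "G \<equiv> Ops M (pairs m) (\<lambda>x. det (gmat m 0 Suc x))"
  assumes "kcond m k"
  shows "(\<Sum>l\<in>Lset m k. all_inv_ops m (vdm_poly m) (ci l)) = (\<Sum>t\<le>m. (-1)^t * G (ci (pt t k)))"
proof -
  let ?U0 = "\<lambda>x. det (gmat m 0 Suc x)"
  have Vdet: "vdm_poly m = (\<lambda>x. det (gmat m 0 id x))" by (rule ext) (simp add: vand)
  have bnd: "Suc m * m + 1 \<le> M" unfolding M_def by (simp add: algebra_simps)
  have gV: "good M (vdm_poly m)" unfolding Vdet by (rule good_mono[OF good_gmat[of m id m 0] bnd]) simp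
  have gU0: "good M ?U0" by (rule good_mono[OF good_gmat[of m Suc m 0] bnd]) simp
  have DG: "Dm m G = all_inv_ops m (vdm_poly m)"
  proof -
    have "Dm m G = Ops M (pairs m) (Dm m ?U0)" unfolding G_def by (rule Dm_Ops_comm)
    also have "Dm m ?U0 = vdm_poly m" unfolding Vdet by (rule Dm_det)
    also have "Ops M (pairs m) (vdm_poly m) = all_inv_ops m (vdm_poly m)"
      by (rule all_inv_ops_Ops[OF gV, symmetric])
    finally show ?thesis .
  qed
  have "(\<Sum>l\<in>Lset m k. Dm m G (ci l)) = (\<Sum>t\<le>m. (-1)^t * G (ci (pt t k)))"
  proof (rule lemmaA[OF assms(3)])
    show "dep m G" unfolding G_def by (rule dep_Ops[OF dep_U])
    show "Hcond m G" unfolding G_def by (rule Hcond_G[OF gU0])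
  qed
  then show ?thesis unfolding DG .
qed


definition strinc :: "nat \<Rightarrow> (nat \<Rightarrow> int) \<Rightarrow> bool" where
  "strinc n k \<longleftrightarrow> (\<forall>i. 1 \<le> i \<longrightarrow> i < n \<longrightarrow> k i < k (i + 1))"

lemma MT_1: "monotone_triangles 1 k = {(\<lambda>i j. if i = 1 \<and> j = 1 then k 1 else 0)}"
proof -
  have "a \<in> monotone_triangles 1 k \<longleftrightarrow> a = (\<lambda>i j. if i = 1 \<and> j = 1 then k 1 else 0)" for a
  proof
    assume a: "a \<in> monotone_triangles 1 k"
    then have mt: "monotone_triangle 1 a" and bt: "\<forall>j\<in>{1..1}. a 1 j = k j"
      unfolding monotone_triangles_def by auto
    have z: "\<And>i j. \<not> (1 \<le> j \<and> j \<le> i \<and> i \<le> 1) \<Longrightarrow> a i j = 0"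
      using mt unfolding monotone_triangle_def by blast
    have b: "a 1 1 = k 1" using bt by simp
    show "a = (\<lambda>i j. if i = 1 \<and> j = 1 then k 1 else 0)"
    proof (intro ext)
      fix i j
      show "a i j = (if i = 1 \<and> j = 1 then k 1 else 0)"
      proof (cases "i = 1 \<and> j = 1")
        case True then show ?thesis using b by simp
      next
        case False
        then have "\<not> (1 \<le> j \<and> j \<le> i \<and> i \<le> 1)" by auto
        then have "a i j = 0" by (rule z)
        then show ?thesis using False by (simp only: if_not_P if_False)
      qed
    qed
  next
    assume "a = (\<lambda>i j. if i = 1 \<and> j = 1 then k 1 else 0)"
    then show "a \<in> monotone_triangles 1 k"
      unfolding monotone_triangles_def monotone_triangle_def by auto
  qed
  then show ?thesis by blast
qed

context
  fixes m :: nat and k :: "nat \<Rightarrow> int"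
  assumes m1: "1 \<le> m" and sk: "strinc (Suc m) k"
begin

definition krow :: "nat \<Rightarrow> int" where
  "krow j = (if 1 \<le> j \<and> j \<le> Suc m then k j else 0)"

definition ext :: "(nat \<Rightarrow> nat \<Rightarrow> int) \<Rightarrow> nat \<Rightarrow> nat \<Rightarrow> int" where
  "ext b = b(Suc m := krow)"

lemma MT_row:
  assumes a: "a \<in> monotone_triangles (Suc m) k"
  shows "a m \<in> Lset m k" "a = ext (a(Suc m := (\<lambda>_. 0)))" "a(Suc m := (\<lambda>_. 0)) \<in> monotone_triangles m (a m)"
proof -
  have z: "\<And>i j. \<not> (1 \<le> j \<and> j \<le> i \<and> i \<le> Suc m) \<Longrightarrow> a i j = 0"
    and c2: "\<And>i j. 2 \<le> i \<Longrightarrow> i \<le> Suc m \<Longrightarrow> 1 \<le> j \<Longrightarrow> j < i \<Longrightarrow> a i j \<le> a (i - 1) j \<and> a (i - 1) j \<le> a i (j + 1)"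
    and c3: "\<And>i j. i \<le> Suc m \<Longrightarrow> 1 \<le> j \<Longrightarrow> j < i \<Longrightarrow> a i j < a i (j + 1)"
    and bot: "\<And>j. 1 \<le> j \<Longrightarrow> j \<le> Suc m \<Longrightarrow> a (Suc m) j = k j"
    using a unfolding monotone_triangles_def monotone_triangle_def by auto
  show "a m \<in> Lset m k"
    unfolding Lset_def
  proof (intro CollectI conjI allI impI)
    fix j assume "j = 0 \<or> m < j" then show "a m j = 0" using z by auto
  next
    fix j assume j: "1 \<le> j" "j \<le> m"
    have "a (Suc m) j \<le> a (Suc m - 1) j \<and> a (Suc m - 1) j \<le> a (Suc m) (j + 1)"
      using c2[of "Suc m" j] j m1 by simp
    then show "k j \<le> a m j" "a m j \<le> k (Suc j)" using bot[of j] bot[of "Suc j"] j by auto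
  next
    fix j assume j: "1 \<le> j" "j < m"
    show "a m j < a m (Suc j)" using c3[of m j] j by simp
  qed
  show "a = ext (a(Suc m := (\<lambda>_. 0)))"
  proof (intro ext)
    fix i j
    show "a i j = ext (a(Suc m := (\<lambda>_. 0))) i j"
    proof (cases "i = Suc m")
      case True
      then show ?thesis using z[where i=i and j=j] bot[of j] by (auto simp: ext_def krow_def)
    next
      case False then show ?thesis by (simp add: ext_def)
    qed
  qed
  show "a(Suc m := (\<lambda>_. 0)) \<in> monotone_triangles m (a m)"
    unfolding monotone_triangles_def monotone_triangle_def
  proof (intro CollectI conjI allI impI ballI)
    fix i j assume "\<not> (1 \<le> j \<and> j \<le> i \<and> i \<le> m)"
    then show "(a(Suc m := (\<lambda>_. 0))) i j = 0" using z[where i=i and j=j] by (cases "i = Suc m") auto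
  next
    fix i j assume "2 \<le> i \<and> i \<le> m \<and> 1 \<le> j \<and> j < i"
    then show "(a(Suc m := (\<lambda>_. 0))) i j \<le> (a(Suc m := (\<lambda>_. 0))) (i - 1) j"
      "(a(Suc m := (\<lambda>_. 0))) (i - 1) j \<le> (a(Suc m := (\<lambda>_. 0))) i (j + 1)"
      using c2[of i j] by auto
  next
    fix i j assume "i \<le> m \<and> 1 \<le> j \<and> j < i"
    then show "(a(Suc m := (\<lambda>_. 0))) i j < (a(Suc m := (\<lambda>_. 0))) i (j + 1)"
      using c3[of i j] by auto
  qed auto
qed

lemma MT_ext:
  assumes l: "l \<in> Lset m k" and b: "b \<in> monotone_triangles m l"
  shows "ext b \<in> monotone_triangles (Suc m) k" "ext b m = l"
proof -
  have z: "\<And>i j. \<not> (1 \<le> j \<and> j \<le> i \<and> i \<le> m) \<Longrightarrow> b i j = 0"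
    and c2: "\<And>i j. 2 \<le> i \<Longrightarrow> i \<le> m \<Longrightarrow> 1 \<le> j \<Longrightarrow> j < i \<Longrightarrow> b i j \<le> b (i - 1) j \<and> b (i - 1) j \<le> b i (j + 1)"
    and c3: "\<And>i j. i \<le> m \<Longrightarrow> 1 \<le> j \<Longrightarrow> j < i \<Longrightarrow> b i j < b i (j + 1)"
    and bot: "\<And>j. 1 \<le> j \<Longrightarrow> j \<le> m \<Longrightarrow> b m j = l j"
    using b unfolding monotone_triangles_def monotone_triangle_def by auto
  have lz: "\<And>j. j = 0 \<or> m < j \<Longrightarrow> l j = 0"
    and lb: "\<And>j. 1 \<le> j \<Longrightarrow> j \<le> m \<Longrightarrow> k j \<le> l j \<and> l j \<le> k (Suc j)"
    using l unfolding Lset_def by auto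
  have kk: "\<And>i. 1 \<le> i \<Longrightarrow> i < Suc m \<Longrightarrow> k i < k (i + 1)" using sk unfolding strinc_def by auto
  show "ext b m = l"
  proof
    fix j show "ext b m j = l j"
    proof (cases "1 \<le> j \<and> j \<le> m")
      case True then show ?thesis using bot by (simp add: ext_def)
    next
      case False then show ?thesis using z[where i=m and j=j] lz[of j] by (auto simp: ext_def)
    qed
  qed
  have C2: "ext b i j \<le> ext b (i - 1) j \<and> ext b (i - 1) j \<le> ext b i (j + 1)"
    if a: "2 \<le> i \<and> i \<le> Suc m \<and> 1 \<le> j \<and> j < i" for i j
  proof (cases "i = Suc m")
    case True
    then have "ext b (i - 1) j = l j" using bot[of j] a by (simp add: ext_def)
    moreover have "ext b i j = k j" "ext b i (j + 1) = k (Suc j)" using True a by (auto simp: ext_def krow_def)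
    ultimately show ?thesis using lb[of j] a True by auto
  next
    case False
    then have im: "i \<le> m" and i1: "i - 1 \<noteq> Suc m" using a by auto
    have "b i j \<le> b (i - 1) j \<and> b (i - 1) j \<le> b i (j + 1)" using c2[of i j] a im by simp
    then show ?thesis using False i1 by (simp add: ext_def)
  qed
  show "ext b \<in> monotone_triangles (Suc m) k"
    unfolding monotone_triangles_def monotone_triangle_def
  proof (intro CollectI conjI allI impI ballI)
    fix i j assume a: "\<not> (1 \<le> j \<and> j \<le> i \<and> i \<le> Suc m)"
    show "ext b i j = 0"
    proof (cases "i = Suc m")
      case True
      then have "\<not> (1 \<le> j \<and> j \<le> Suc m)" using a by simp
      then have "krow j = 0" unfolding krow_def by (rule if_not_P)
      then show ?thesis using True by (simp add: ext_def)
    next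
      case False
      have "\<not> (1 \<le> j \<and> j \<le> i \<and> i \<le> m)" using a by auto
      then have "b i j = 0" by (rule z)
      then show ?thesis using False by (simp add: ext_def)
    qed
  next
    fix i j assume a: "2 \<le> i \<and> i \<le> Suc m \<and> 1 \<le> j \<and> j < i"
    then show "ext b i j \<le> ext b (i - 1) j" using C2 by blast
  next
    fix i j assume a: "2 \<le> i \<and> i \<le> Suc m \<and> 1 \<le> j \<and> j < i"
    then show "ext b (i - 1) j \<le> ext b i (j + 1)" using C2 by blast
  next
    fix i j assume a: "i \<le> Suc m \<and> 1 \<le> j \<and> j < i"
    show "ext b i j < ext b i (j + 1)"
    proof (cases "i = Suc m")
      case True then show ?thesis using a kk[of j] by (auto simp: ext_def krow_def)
    next
      case False then show ?thesis using a c3[of i j] by (simp add: ext_def)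
    qed
  next
    fix j assume "j \<in> {1..Suc m}"
    then show "ext b (Suc m) j = k j" by (simp add: ext_def krow_def)
  qed
qed

lemma MT_decomp: "monotone_triangles (Suc m) k = (\<Union>l\<in>Lset m k. ext ` monotone_triangles m l)"
proof
  show "monotone_triangles (Suc m) k \<subseteq> (\<Union>l\<in>Lset m k. ext ` monotone_triangles m l)"
  proof
    fix a assume a: "a \<in> monotone_triangles (Suc m) k"
    have "a \<in> ext ` monotone_triangles m (a m)" by (rule image_eqI[of a ext "a(Suc m := (\<lambda>_. 0))", OF MT_row(2,3)[OF a]])
    then show "a \<in> (\<Union>l\<in>Lset m k. ext ` monotone_triangles m l)" by (rule UN_I[OF MT_row(1)[OF a]])
  qed
  show "(\<Union>l\<in>Lset m k. ext ` monotone_triangles m l) \<subseteq> monotone_triangles (Suc m) k"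
  proof
    fix a assume "a \<in> (\<Union>l\<in>Lset m k. ext ` monotone_triangles m l)"
    then obtain l b where "l \<in> Lset m k" "b \<in> monotone_triangles m l" "a = ext b" by auto
    then show "a \<in> monotone_triangles (Suc m) k" using MT_ext(1) by simp
  qed
qed

lemma inj_ext: "inj_on ext (monotone_triangles m l)"
proof (rule inj_onI)
  fix b b' assume b: "b \<in> monotone_triangles m l" and b': "b' \<in> monotone_triangles m l" and e: "ext b = ext b'"
  have zb: "b (Suc m) = (\<lambda>_. 0)" using b unfolding monotone_triangles_def monotone_triangle_def by auto
  have zb': "b' (Suc m) = (\<lambda>_. 0)" using b' unfolding monotone_triangles_def monotone_triangle_def by auto
  show "b = b'"
  proof
    fix i show "b i = b' i"
      using fun_cong[OF e, of i] zb zb' by (cases "i = Suc m") (auto simp: ext_def)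
  qed
qed

lemma MT_card_rec:
  assumes fin: "\<And>l. l \<in> Lset m k \<Longrightarrow> finite (monotone_triangles m l)"
  shows "card (monotone_triangles (Suc m) k) = (\<Sum>l\<in>Lset m k. card (monotone_triangles m l))"
    and "finite (monotone_triangles (Suc m) k)"
proof -
  have kc: "kcond m k" using sk m1 unfolding kcond_def strinc_def by auto
  have fL: "finite (Lset m k)" by (rule finite_Lset[OF kc])
  have disj: "\<forall>l\<in>Lset m k. \<forall>l'\<in>Lset m k. l \<noteq> l' \<longrightarrow> ext ` monotone_triangles m l \<inter> ext ` monotone_triangles m l' = {}"
  proof (intro ballI impI)
    fix l l' assume l: "l \<in> Lset m k" and l': "l' \<in> Lset m k" and ne: "l \<noteq> l'"
    show "ext ` monotone_triangles m l \<inter> ext ` monotone_triangles m l' = {}"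
    proof (rule equals0I)
      fix a assume "a \<in> ext ` monotone_triangles m l \<inter> ext ` monotone_triangles m l'"
      then obtain b b' where b: "b \<in> monotone_triangles m l" "a = ext b"
        and b': "b' \<in> monotone_triangles m l'" "a = ext b'" by blast
      have "a m = l" using MT_ext(2)[OF l b(1)] b(2) by simp
      moreover have "a m = l'" using MT_ext(2)[OF l' b'(1)] b'(2) by simp
      ultimately show False using ne by simp
    qed
  qed
  have "card (\<Union>l\<in>Lset m k. ext ` monotone_triangles m l) = (\<Sum>l\<in>Lset m k. card (ext ` monotone_triangles m l))"
    by (rule card_UN_disjoint[OF fL]) (use fin disj in auto)
  also have "\<dots> = (\<Sum>l\<in>Lset m k. card (monotone_triangles m l))"
    by (rule sum.cong[OF refl]) (rule card_image[OF inj_ext])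
  finally show "card (monotone_triangles (Suc m) k) = (\<Sum>l\<in>Lset m k. card (monotone_triangles m l))"
    unfolding MT_decomp .
  show "finite (monotone_triangles (Suc m) k)" unfolding MT_decomp using fL fin by auto
qed

end

lemma Lset_strinc: "l \<in> Lset m k \<Longrightarrow> strinc m l"
  unfolding Lset_def strinc_def by auto

lemma MT_finite: "1 \<le> n \<Longrightarrow> strinc n k \<Longrightarrow> finite (monotone_triangles n k)"
proof (induction n arbitrary: k rule: less_induct)
  case (less n)
  show ?case
  proof (cases "n = 1")
    case True then show ?thesis unfolding True MT_1 by simp
  next
    case False
    then obtain m where n: "n = Suc m" and m1: "1 \<le> m" using less.prems by (cases n) auto
    have "finite (monotone_triangles m l)" if "l \<in> Lset m k" for l
      using less.IH[of m l] n m1 Lset_strinc[OF that] by simp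
    then show ?thesis using MT_card_rec(2)[OF m1] less.prems n by simp
  qed
qed


lemma main_thm: "1 \<le> n \<Longrightarrow> strinc n k \<Longrightarrow> of_nat (card (monotone_triangles n k)) = all_inv_ops n (vdm_poly n) (ci k)"
proof (induction n arbitrary: k rule: less_induct)
  case (less n)
  show ?case
  proof (cases "n = 1")
    case True
    have "all_inv_ops 1 f = f" for f by (simp add: all_inv_ops_def)
    moreover have "vdm_poly 1 x = 1" for x by (simp add: vdm_poly_def)
    ultimately show ?thesis unfolding True MT_1 by simp
  next
    case False
    then obtain m where n: "n = Suc m" and m1: "1 \<le> m" using less.prems by (cases n) auto
    have sk: "strinc (Suc m) k" using less.prems n by simp
    have kc: "kcond m k" using sk m1 unfolding kcond_def strinc_def by auto
    have fin: "finite (monotone_triangles m l)" if "l \<in> Lset m k" for l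
      using MT_finite[OF m1 Lset_strinc[OF that]] .
    have IH: "of_nat (card (monotone_triangles m l)) = all_inv_ops m (vdm_poly m) (ci l)" if "l \<in> Lset m k" for l
      using less.IH[of m l] n m1 Lset_strinc[OF that] by simp
    have "of_nat (card (monotone_triangles (Suc m) k)) = (of_nat (\<Sum>l\<in>Lset m k. card (monotone_triangles m l)) :: complex)"
      using MT_card_rec(1)[OF m1 sk fin] by simp
    also have "\<dots> = (\<Sum>l\<in>Lset m k. of_nat (card (monotone_triangles m l)))" by simp
    also have "\<dots> = (\<Sum>l\<in>Lset m k. all_inv_ops m (vdm_poly m) (ci l))"
      by (rule sum.cong[OF refl]) (rule IH)
    also have "\<dots> = all_inv_ops (Suc m) (vdm_poly (Suc m)) (ci k)"
      unfolding lhs_eq[OF kc] rhs_eq ..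
    finally show ?thesis using n by simp
  qed
qed

theorem theorem2:
  fixes n :: nat and k :: "nat \<Rightarrow> int"
  assumes "n \<ge> 1"
    and "\<And>i. 1 \<le> i \<Longrightarrow> i < n \<Longrightarrow> k i < k (i + 1)"
  shows "of_nat (card (monotone_triangles n k))
         = all_inv_ops n (vdm_poly n) (\<lambda>i. of_int (k i))"
proof -
  have "strinc n k" using assms(2) unfolding strinc_def by blast
  from main_thm[OF assms(1) this] show ?thesis by (simp add: ci_def)
qed


end
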